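(* Let $(X,\mathcal{A},p)$ be a standard Borel probability space and let $n\ge1$ be an integer. For a sub-$\sigma$-algebra $\mathcal{B}\subseteq\mathcal{A}$ let $E_\mathcal{B}:L^n(X,\mathcal{A},p)\to L^n(X,\mathcal{A},p)$, $f\mapsto\mathbb{E}[f\mid\mathcal{B}]$ (a bounded idempotent operator with image $L^n(X,\mathcal{B},p)$). Order bounded idempotent operators on $L^n(X,\mathcal{A},p)$ by $a\le b$ iff $a\circ b=b\circ a=a$. (1) If $(\mathcal{B}_\lambda)_{\lambda\in\Lambda}$ is an increasing filtration (indexed by a directed set) and $\mathcal{B}_\infty=\bigvee_\lambda\mathcal{B}_\lambda$, then $E_{\mathcal{B}_\infty}$ is the supremum of $\{E_{\mathcal{B}_\lambda}\}$ in this order. (2) If $(\mathcal{C}_\lambda)_{\lambda\in\Lambda}$ is a decreasing filtration and $\mathcal{C}_\infty=\bigcap_\lambda\overline{\mathcal{C}_\lambda}$, where $\overline{\mathcal{C}}$ is the $\sigma$-algebra generated by $\mathcal{C}$ and the $p$-null sets of $\mathcal{A}$, then $E_{\mathcal{C}_\infty}$ is the infimum of $\{E_{\mathcal{C}_\lambda}\}$ in this order.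
   Context: $\bigvee_\lambda\mathcal{B}_\lambda$ is the $\sigma$-algebra generated by the union. Increasing filtration: $\mathcal{B}_\lambda\subseteq\mathcal{B}_\mu$ for $\lambda\le\mu$; decreasing: $\mathcal{C}_\lambda\supseteq\mathcal{C}_\mu$ for $\lambda\le\mu$. *)

theory Defs
  imports "HOL-Probability.Probability"
begin

text \<open>Elements of L^n(X,A,p), represented by A-measurable real functions with
  integrable n-th absolute power; two representatives denote the same element
  iff they agree p-almost everywhere.\<close>

definition Lfun :: "'a measure \<Rightarrow> nat \<Rightarrow> ('a \<Rightarrow> real) set" where
  "Lfun M n = {f. f \<in> borel_measurable M \<and> integrable M (\<lambda>x. \<bar>f x\<bar> ^ n)}"

definition Lnorm :: "'a measure \<Rightarrow> nat \<Rightarrow> ('a \<Rightarrow> real) \<Rightarrow> real" where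
  "Lnorm M n f = (\<integral>x. \<bar>f x\<bar> ^ n \<partial>M) powr (1 / real n)"

definition op_eq :: "'a measure \<Rightarrow> nat \<Rightarrow> (('a \<Rightarrow> real) \<Rightarrow> ('a \<Rightarrow> real))
    \<Rightarrow> (('a \<Rightarrow> real) \<Rightarrow> ('a \<Rightarrow> real)) \<Rightarrow> bool" where
  "op_eq M n T S \<longleftrightarrow> (\<forall>f \<in> Lfun M n. AE x in M. T f x = S f x)"

text \<open>Bounded (linear) operator on L^n: a map of representatives which maps L^n
  into L^n, respects a.e. equality (so descends to L^n), is linear modulo a.e.
  equality and is bounded in the L^n norm.\<close>

definition bounded_op :: "'a measure \<Rightarrow> nat \<Rightarrow> (('a \<Rightarrow> real) \<Rightarrow> ('a \<Rightarrow> real)) \<Rightarrow> bool" where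
  "bounded_op M n T \<longleftrightarrow>
     (\<forall>f \<in> Lfun M n. T f \<in> Lfun M n) \<and>
     (\<forall>f \<in> Lfun M n. \<forall>g \<in> Lfun M n. (AE x in M. f x = g x) \<longrightarrow> (AE x in M. T f x = T g x)) \<and>
     (\<forall>f \<in> Lfun M n. \<forall>g \<in> Lfun M n. \<forall>c::real.
        AE x in M. T (\<lambda>y. c * f y + g y) x = c * T f x + T g x) \<and>
     (\<exists>C. \<forall>f \<in> Lfun M n. Lnorm M n (T f) \<le> C * Lnorm M n f)"

definition bounded_idempotent :: "'a measure \<Rightarrow> nat \<Rightarrow> (('a \<Rightarrow> real) \<Rightarrow> ('a \<Rightarrow> real)) \<Rightarrow> bool" where
  "bounded_idempotent M n T \<longleftrightarrow> bounded_op M n T \<and> op_eq M n (T \<circ> T) T"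

definition idem_le :: "'a measure \<Rightarrow> nat \<Rightarrow> (('a \<Rightarrow> real) \<Rightarrow> ('a \<Rightarrow> real))
    \<Rightarrow> (('a \<Rightarrow> real) \<Rightarrow> ('a \<Rightarrow> real)) \<Rightarrow> bool" where
  "idem_le M n a b \<longleftrightarrow> op_eq M n (a \<circ> b) a \<and> op_eq M n (b \<circ> a) a"

definition is_sup_idem :: "'a measure \<Rightarrow> nat \<Rightarrow> (('a \<Rightarrow> real) \<Rightarrow> ('a \<Rightarrow> real)) set
    \<Rightarrow> (('a \<Rightarrow> real) \<Rightarrow> ('a \<Rightarrow> real)) \<Rightarrow> bool" where
  "is_sup_idem M n S s \<longleftrightarrow> bounded_idempotent M n s \<and> (\<forall>a \<in> S. idem_le M n a s) \<and>
     (\<forall>u. bounded_idempotent M n u \<and> (\<forall>a \<in> S. idem_le M n a u) \<longrightarrow> idem_le M n s u)"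

definition is_inf_idem :: "'a measure \<Rightarrow> nat \<Rightarrow> (('a \<Rightarrow> real) \<Rightarrow> ('a \<Rightarrow> real)) set
    \<Rightarrow> (('a \<Rightarrow> real) \<Rightarrow> ('a \<Rightarrow> real)) \<Rightarrow> bool" where
  "is_inf_idem M n S s \<longleftrightarrow> bounded_idempotent M n s \<and> (\<forall>a \<in> S. idem_le M n s a) \<and>
     (\<forall>u. bounded_idempotent M n u \<and> (\<forall>a \<in> S. idem_le M n u a) \<longrightarrow> idem_le M n u s)"

definition cond_exp_op :: "'a measure \<Rightarrow> 'a measure \<Rightarrow> ('a \<Rightarrow> real) \<Rightarrow> ('a \<Rightarrow> real)" where
  "cond_exp_op M B = real_cond_exp M B"

definition directed_set :: "'i set \<Rightarrow> ('i \<Rightarrow> 'i \<Rightarrow> bool) \<Rightarrow> bool" where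
  "directed_set I le \<longleftrightarrow> I \<noteq> {} \<and> (\<forall>i\<in>I. le i i) \<and>
     (\<forall>i\<in>I. \<forall>j\<in>I. \<forall>k\<in>I. le i j \<and> le j k \<longrightarrow> le i k) \<and>
     (\<forall>i\<in>I. \<forall>j\<in>I. \<exists>k\<in>I. le i k \<and> le j k)"

definition join_sa :: "'a measure \<Rightarrow> 'i set \<Rightarrow> ('i \<Rightarrow> 'a measure) \<Rightarrow> 'a measure" where
  "join_sa M I B = sigma (space M) (\<Union>i\<in>I. sets (B i))"

definition null_closure :: "'a measure \<Rightarrow> 'a measure \<Rightarrow> 'a set set" where
  "null_closure M C = sigma_sets (space M) (sets C \<union> null_sets M)"

definition meet_closure_sa :: "'a measure \<Rightarrow> 'i set \<Rightarrow> ('i \<Rightarrow> 'a measure) \<Rightarrow> 'a measure" where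
  "meet_closure_sa M I C = sigma (space M) (\<Inter>i\<in>I. null_closure M (C i))"

end

theory Submission
  imports Defs
begin

lemma convex_abs_pow: "convex_on (UNIV::real set) (\<lambda>x. \<bar>x\<bar> ^ m)"
proof -
  have cp: "convex_on {0::real..} (\<lambda>x. x ^ m)"
  proof (cases "even m")
    case True then show ?thesis using convex_power_even convex_on_subset by blast
  next
    case False then show ?thesis using convex_power_odd by blast
  qed
  show ?thesis
  proof (rule convex_onI)
    show "convex (UNIV::real set)" by simp
    fix t x y :: real assume t: "0 < t" "t < 1"
    have "\<bar>(1 - t) * x + t * y\<bar> ^ m \<le> ((1 - t) * \<bar>x\<bar> + t * \<bar>y\<bar>) ^ m"
      apply (rule power_mono)
      using t by (auto intro!: order.trans[OF abs_triangle_ineq] simp: abs_mult)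
    also have "\<dots> \<le> (1 - t) * \<bar>x\<bar> ^ m + t * \<bar>y\<bar> ^ m"
      using convex_onD[OF cp, of t "\<bar>x\<bar>" "\<bar>y\<bar>"] t by auto
    finally show "\<bar>(1 - t) *\<^sub>R x + t *\<^sub>R y\<bar> ^ m \<le> (1 - t) * \<bar>x\<bar> ^ m + t * \<bar>y\<bar> ^ m" by simp
  qed
qed

lemma pow_add_bound:
  fixes a b :: real
  shows "\<bar>a + b\<bar> ^ m \<le> 2 ^ m * (\<bar>a\<bar> ^ m + \<bar>b\<bar> ^ m)"
proof -
  have "\<bar>a + b\<bar> ^ m \<le> (2 * max \<bar>a\<bar> \<bar>b\<bar>) ^ m"
    by (rule power_mono) auto
  also have "\<dots> = 2 ^ m * (max \<bar>a\<bar> \<bar>b\<bar>) ^ m" by (simp add: power_mult_distrib)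
  also have "(max \<bar>a\<bar> \<bar>b\<bar>) ^ m \<le> \<bar>a\<bar> ^ m + \<bar>b\<bar> ^ m"
    by (cases "\<bar>a\<bar> \<le> \<bar>b\<bar>") (auto simp: max_def)
  finally show ?thesis by simp
qed

lemma abs_le_one_plus_pow:
  fixes y :: real assumes "1 \<le> m"
  shows "\<bar>y\<bar> \<le> 1 + \<bar>y\<bar> ^ m"
proof (cases "\<bar>y\<bar> \<le> 1")
  case True then show ?thesis by (simp add: add_increasing2)
next
  case False
  then have "\<bar>y\<bar> ^ 1 \<le> \<bar>y\<bar> ^ m" by (intro power_increasing assms) auto
  then show ?thesis by simp
qed

locale LS = prob_space M for M :: "'a measure" +
  fixes n :: nat
  assumes n1: "1 \<le> n"
begin

lemma Lfun_meas: "f \<in> Lfun M n \<Longrightarrow> f \<in> borel_measurable M"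
  by (simp add: Lfun_def)

lemma Lfun_pow_int: "f \<in> Lfun M n \<Longrightarrow> integrable M (\<lambda>x. \<bar>f x\<bar> ^ n)"
  by (simp add: Lfun_def)

lemma integrable_of_pow:
  fixes f :: "'a \<Rightarrow> real"
  assumes "f \<in> borel_measurable M" "integrable M (\<lambda>x. \<bar>f x\<bar> ^ m)" "1 \<le> m"
  shows "integrable M f"
proof (rule Bochner_Integration.integrable_bound[where f="\<lambda>x. 1 + \<bar>f x\<bar> ^ m"])
  show "integrable M (\<lambda>x. 1 + \<bar>f x\<bar> ^ m)" using assms(2) by (intro Bochner_Integration.integrable_add) auto
  show "AE x in M. norm (f x) \<le> norm (1 + \<bar>f x\<bar> ^ m)"
  proof (intro AE_I2)
    fix x
    have h: "\<bar>f x\<bar> \<le> 1 + \<bar>f x\<bar> ^ m" by (rule abs_le_one_plus_pow[OF assms(3)])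
    have "0 \<le> 1 + \<bar>f x\<bar> ^ m" by (simp add: add_nonneg_nonneg)
    then show "norm (f x) \<le> norm (1 + \<bar>f x\<bar> ^ m)" using h by (simp only: real_norm_def abs_of_nonneg)
  qed
qed (rule assms(1))

lemma Lfun_int: assumes "f \<in> Lfun M n" shows "integrable M f"
proof (rule integrable_of_pow[OF _ _ n1])
  show "f \<in> borel_measurable M" "integrable M (\<lambda>x. \<bar>f x\<bar> ^ n)" using assms by (simp_all add: Lfun_def)
qed

lemma Lfun_lin:
  assumes "f \<in> Lfun M n" "g \<in> Lfun M n"
  shows "(\<lambda>x. c * f x + g x) \<in> Lfun M n"
proof -
  have [measurable]: "f \<in> borel_measurable M" "g \<in> borel_measurable M"
    using assms by (simp_all add: Lfun_def)
  have i1: "integrable M (\<lambda>x. \<bar>f x\<bar> ^ n)" "integrable M (\<lambda>x. \<bar>g x\<bar> ^ n)"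
    using assms by (simp_all add: Lfun_def)
  have "integrable M (\<lambda>x. \<bar>c * f x + g x\<bar> ^ n)"
  proof (rule Bochner_Integration.integrable_bound[where f="\<lambda>x. 2 ^ n * (\<bar>c\<bar> ^ n * \<bar>f x\<bar> ^ n + \<bar>g x\<bar> ^ n)"])
    show "integrable M (\<lambda>x. 2 ^ n * (\<bar>c\<bar> ^ n * \<bar>f x\<bar> ^ n + \<bar>g x\<bar> ^ n))"
      using i1 by (intro integrable_mult_right Bochner_Integration.integrable_add integrable_mult_right)
    show "AE x in M. norm (\<bar>c * f x + g x\<bar> ^ n) \<le> norm (2 ^ n * (\<bar>c\<bar> ^ n * \<bar>f x\<bar> ^ n + \<bar>g x\<bar> ^ n))"
    proof (intro AE_I2)
      fix x
      have "\<bar>c * f x + g x\<bar> ^ n \<le> 2 ^ n * (\<bar>c * f x\<bar> ^ n + \<bar>g x\<bar> ^ n)" by (rule pow_add_bound)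
      then show "norm (\<bar>c * f x + g x\<bar> ^ n) \<le> norm (2 ^ n * (\<bar>c\<bar> ^ n * \<bar>f x\<bar> ^ n + \<bar>g x\<bar> ^ n))"
        by (simp add: abs_mult power_mult_distrib)
    qed
  qed measurable
  then show ?thesis by (simp add: Lfun_def)
qed

lemma Lfun_bounded:
  assumes "f \<in> borel_measurable M" "AE x in M. \<bar>f x\<bar> \<le> K"
  shows "f \<in> Lfun M n"
proof -
  have "integrable M (\<lambda>x. \<bar>f x\<bar> ^ n)"
  proof (rule Bochner_Integration.integrable_bound[where f="\<lambda>x. K ^ n"])
    show "integrable M (\<lambda>x. K ^ n)" by simp
    show "AE x in M. norm (\<bar>f x\<bar> ^ n) \<le> norm (K ^ n)"
      using assms(2)
    proof eventually_elim
      case (elim x)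
      then have "\<bar>f x\<bar> ^ n \<le> K ^ n" by (intro power_mono) simp_all
      then show ?case by simp
    qed
  qed (use assms(1) in measurable)
  then show ?thesis using assms(1) by (simp add: Lfun_def)
qed

lemma Lfun_cong:
  assumes "f \<in> Lfun M n" "g \<in> borel_measurable M" "AE x in M. f x = g x"
  shows "g \<in> Lfun M n"
proof -
  have "integrable M (\<lambda>x. \<bar>f x\<bar> ^ n)" using assms(1) by (simp add: Lfun_def)
  moreover have "AE x in M. \<bar>f x\<bar> ^ n = \<bar>g x\<bar> ^ n" using assms(3) by auto
  ultimately have "integrable M (\<lambda>x. \<bar>g x\<bar> ^ n)"
    using integrable_cong_AE_imp[of M "\<lambda>x. \<bar>f x\<bar> ^ n" "\<lambda>x. \<bar>g x\<bar> ^ n"] assms(2) by simp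
  then show ?thesis using assms by (simp add: Lfun_def)
qed


definition Ni :: "('a \<Rightarrow> real) \<Rightarrow> real" where
  "Ni f = (\<integral>x. \<bar>f x\<bar> ^ n \<partial>M)"

lemma Ni_nonneg: "0 \<le> Ni f"
  unfolding Ni_def by (rule Bochner_Integration.integral_nonneg) simp

lemma Lnorm_pow: "(Lnorm M n f) ^ n = Ni f"
proof -
  have nn: "n \<noteq> 0" using n1 by simp
  have "(Lnorm M n f) ^ n = (Lnorm M n f) powr (real n)"
    unfolding Lnorm_def by (rule powr_realpow'[symmetric]) (simp_all add: nn)
  also have "\<dots> = Ni f powr (1 / real n * real n)"
    unfolding Lnorm_def Ni_def by (rule powr_powr)
  also have "\<dots> = Ni f" using nn Ni_nonneg[of f] by simp
  finally show ?thesis .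
qed

lemma Lnorm_nonneg: "0 \<le> Lnorm M n f"
  unfolding Lnorm_def by simp

lemma Lnorm_mono: "Ni f \<le> Ni g \<Longrightarrow> Lnorm M n f \<le> Lnorm M n g"
  unfolding Lnorm_def Ni_def[symmetric] by (rule powr_mono2) (simp_all add: Ni_nonneg)

lemma Ni_cong:
  assumes "f \<in> borel_measurable M" "g \<in> borel_measurable M" "AE x in M. f x = g x"
  shows "Ni f = Ni g"
  unfolding Ni_def using assms by (intro integral_cong_AE) (auto elim: eventually_mono)

lemma Lfun_zero: "(\<lambda>x. 0) \<in> Lfun M n"
  by (rule Lfun_bounded[where K=0]) simp_all

lemma Lfun_scale: "f \<in> Lfun M n \<Longrightarrow> (\<lambda>x. c * f x) \<in> Lfun M n"
  using Lfun_lin[OF _ Lfun_zero, of f c] by simp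

lemma Lfun_add: "f \<in> Lfun M n \<Longrightarrow> g \<in> Lfun M n \<Longrightarrow> (\<lambda>x. f x + g x) \<in> Lfun M n"
  using Lfun_lin[of f g 1] by simp

lemma Lfun_diff: "f \<in> Lfun M n \<Longrightarrow> g \<in> Lfun M n \<Longrightarrow> (\<lambda>x. f x - g x) \<in> Lfun M n"
  using Lfun_lin[of g f "-1"] by simp

lemma Lfun_Ni_int: "f \<in> Lfun M n \<Longrightarrow> integrable M (\<lambda>x. \<bar>f x\<bar> ^ n)"
  by (simp add: Lfun_def)

lemma Ni_tri:
  assumes "f \<in> Lfun M n" "g \<in> Lfun M n"
  shows "Ni (\<lambda>x. f x + g x) \<le> 2 ^ n * (Ni f + Ni g)"
proof -
  have "Ni (\<lambda>x. f x + g x) \<le> (\<integral>x. 2 ^ n * (\<bar>f x\<bar> ^ n + \<bar>g x\<bar> ^ n) \<partial>M)"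
    unfolding Ni_def
  proof (rule integral_mono)
    show "integrable M (\<lambda>x. \<bar>f x + g x\<bar> ^ n)" using Lfun_add[OF assms] by (simp add: Lfun_def)
    show "integrable M (\<lambda>x. 2 ^ n * (\<bar>f x\<bar> ^ n + \<bar>g x\<bar> ^ n))"
      using assms by (intro integrable_mult_right Bochner_Integration.integrable_add) (simp_all add: Lfun_def)
    show "\<bar>f x + g x\<bar> ^ n \<le> 2 ^ n * (\<bar>f x\<bar> ^ n + \<bar>g x\<bar> ^ n)" for x by (rule pow_add_bound)
  qed
  also have "\<dots> = 2 ^ n * (Ni f + Ni g)"
    unfolding Ni_def using assms
    by (subst integral_mult_right_zero, subst Bochner_Integration.integral_add) (simp_all add: Lfun_def)
  finally show ?thesis .
qed

lemma Ni_tri3: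
  assumes "f \<in> Lfun M n" "g \<in> Lfun M n" "h \<in> Lfun M n"
  shows "Ni (\<lambda>x. f x - g x) \<le> 2 ^ n * (Ni (\<lambda>x. f x - h x) + Ni (\<lambda>x. h x - g x))"
  using Ni_tri[OF Lfun_diff[OF assms(1,3)] Lfun_diff[OF assms(3,2)]] by simp

lemma Ni_zero:
  assumes "f \<in> Lfun M n" "Ni f \<le> 0"
  shows "AE x in M. f x = 0"
proof -
  have "Ni f = 0" using assms(2) Ni_nonneg[of f] by simp
  then have "AE x in M. \<bar>f x\<bar> ^ n = 0"
    unfolding Ni_def using Lfun_Ni_int[OF assms(1)]
    by (subst (asm) integral_nonneg_eq_0_iff_AE) auto
  then show ?thesis by eventually_elim simp
qed

lemma le_eps_le0: fixes a :: real assumes "\<And>e. e > 0 \<Longrightarrow> a \<le> e" shows "a \<le> 0"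
  using assms[of "a/2"] by (cases "a > 0") auto

lemma Ni_zero_eps:
  assumes "f \<in> Lfun M n" "\<And>e. e > 0 \<Longrightarrow> Ni f \<le> e"
  shows "AE x in M. f x = 0"
  using Ni_zero[OF assms(1) le_eps_le0[OF assms(2)]] .

end

lemma sfs_of_subalg:
  assumes "prob_space M" "subalgebra M F"
  shows "sigma_finite_subalgebra M F"
proof -
  interpret prob_space M by fact
  have "finite_measure_subalgebra M F"
    by (simp add: assms(2) finite_measure_axioms finite_measure_subalgebra_axioms_def finite_measure_subalgebra_def)
  then show ?thesis by (rule finite_measure_subalgebra_is_sigma_finite)
qed

context LS begin

lemma ce_pow:
  fixes f :: "'a \<Rightarrow> real"
  assumes F: "subalgebra M F" and fm: "f \<in> borel_measurable M"
    and fi: "integrable M (\<lambda>x. \<bar>f x\<bar> ^ m)" and m: "1 \<le> m"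
  shows "integrable M (\<lambda>x. \<bar>real_cond_exp M F f x\<bar> ^ m)"
    and "(\<integral>x. \<bar>real_cond_exp M F f x\<bar> ^ m \<partial>M) \<le> (\<integral>x. \<bar>f x\<bar> ^ m \<partial>M)"
proof -
  interpret sigma_finite_subalgebra M F by (rule sfs_of_subalg[OF prob_space_axioms F])
  have int: "integrable M f" by (rule integrable_of_pow[OF fm fi m])
  have qm: "(\<lambda>x::real. \<bar>x\<bar> ^ m) \<in> borel_measurable borel" by measurable
  show i1: "integrable M (\<lambda>x. \<bar>real_cond_exp M F f x\<bar> ^ m)"
    by (rule integrable_convex_cond_exp[of f UNIV, OF int _ _ fi convex_abs_pow qm]) simp_all
  have "AE x in M. \<bar>real_cond_exp M F f x\<bar> ^ m \<le> real_cond_exp M F (\<lambda>x. \<bar>f x\<bar> ^ m) x"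
    by (rule real_cond_exp_jensens_inequality(2)[of f UNIV, OF int _ _ fi convex_abs_pow qm]) simp_all
  then have "(\<integral>x. \<bar>real_cond_exp M F f x\<bar> ^ m \<partial>M) \<le> (\<integral>x. real_cond_exp M F (\<lambda>x. \<bar>f x\<bar> ^ m) x \<partial>M)"
    by (intro integral_mono_AE i1 real_cond_exp_int(1) fi)
  also have "\<dots> = (\<integral>x. \<bar>f x\<bar> ^ m \<partial>M)" by (rule real_cond_exp_int(2)[OF fi])
  finally show "(\<integral>x. \<bar>real_cond_exp M F f x\<bar> ^ m \<partial>M) \<le> (\<integral>x. \<bar>f x\<bar> ^ m \<partial>M)" .
qed

lemma ce_Lfun:
  assumes F: "subalgebra M F" and f: "f \<in> Lfun M n"
  shows "real_cond_exp M F f \<in> Lfun M n" "Ni (real_cond_exp M F f) \<le> Ni f"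
proof -
  have fm: "f \<in> borel_measurable M" and fi: "integrable M (\<lambda>x. \<bar>f x\<bar> ^ n)" using f by (simp_all add: Lfun_def)
  show "real_cond_exp M F f \<in> Lfun M n" using ce_pow(1)[OF F fm fi n1] by (simp add: Lfun_def)
  show "Ni (real_cond_exp M F f) \<le> Ni f" using ce_pow(2)[OF F fm fi n1] by (simp add: Ni_def)
qed


lemma Ni_scale: "Ni (\<lambda>x. c * f x) = \<bar>c\<bar> ^ n * Ni f"
  unfolding Ni_def by (simp add: abs_mult power_mult_distrib)

lemma bop_Lfun: "bounded_op M n u \<Longrightarrow> f \<in> Lfun M n \<Longrightarrow> u f \<in> Lfun M n"
  unfolding bounded_op_def by blast

lemma bop_meas: "bounded_op M n u \<Longrightarrow> f \<in> Lfun M n \<Longrightarrow> u f \<in> borel_measurable M"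
  using bop_Lfun Lfun_meas by blast

lemma bop_cong: "bounded_op M n u \<Longrightarrow> f \<in> Lfun M n \<Longrightarrow> g \<in> Lfun M n \<Longrightarrow> AE x in M. f x = g x
  \<Longrightarrow> AE x in M. u f x = u g x"
  unfolding bounded_op_def by blast

lemma bop_lin: "bounded_op M n u \<Longrightarrow> f \<in> Lfun M n \<Longrightarrow> g \<in> Lfun M n
  \<Longrightarrow> AE x in M. u (\<lambda>y. c * f y + g y) x = c * u f x + u g x"
  unfolding bounded_op_def by blast

lemma bop_diff:
  assumes "bounded_op M n u" "f \<in> Lfun M n" "g \<in> Lfun M n"
  shows "AE x in M. u (\<lambda>y. f y - g y) x = u f x - u g x"
proof -
  have "(\<lambda>y. f y - g y) = (\<lambda>y. (-1) * g y + f y)" by auto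
  then show ?thesis using bop_lin[OF assms(1,3,2), of "-1"] by simp
qed

lemma bop_add:
  assumes "bounded_op M n u" "f \<in> Lfun M n" "g \<in> Lfun M n"
  shows "AE x in M. u (\<lambda>y. f y + g y) x = u f x + u g x"
  using bop_lin[OF assms(1,2,3), of 1] by simp

lemma bop_scale:
  assumes "bounded_op M n u" "f \<in> Lfun M n"
  shows "AE x in M. u (\<lambda>y. c * f y) x = c * u f x"
proof -
  have z: "AE x in M. u (\<lambda>y. 0) x = 0"
    using bop_diff[OF assms(1) Lfun_zero Lfun_zero] by simp
  show ?thesis using bop_lin[OF assms(1,2) Lfun_zero, of c] z by eventually_elim simp
qed

lemma bop_K:
  assumes "bounded_op M n u"
  obtains K where "K \<ge> 0" "\<And>f. f \<in> Lfun M n \<Longrightarrow> Ni (u f) \<le> K * Ni f"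
proof -
  obtain C where C: "\<And>f. f \<in> Lfun M n \<Longrightarrow> Lnorm M n (u f) \<le> C * Lnorm M n f"
    using assms unfolding bounded_op_def by blast
  define C' where "C' = max C 0"
  have "Ni (u f) \<le> C' ^ n * Ni f" if f: "f \<in> Lfun M n" for f
  proof -
    have "Lnorm M n (u f) \<le> C' * Lnorm M n f"
      using C[OF f] Lnorm_nonneg[of f] unfolding C'_def
      by (metis max.cobounded1 mult_right_mono order_trans)
    then have "Lnorm M n (u f) ^ n \<le> (C' * Lnorm M n f) ^ n"
      by (intro power_mono Lnorm_nonneg)
    then show ?thesis by (simp add: power_mult_distrib Lnorm_pow)
  qed
  moreover have "C' ^ n \<ge> 0" unfolding C'_def by simp
  ultimately show ?thesis using that by blast
qed

lemma bop_approx: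
  assumes u: "bounded_op M n u" and f: "f \<in> Lfun M n"
    and appr: "\<And>e. e > 0 \<Longrightarrow> \<exists>g\<in>Lfun M n. (AE x in M. u g x = c * g x) \<and> Ni (\<lambda>x. f x - g x) \<le> e"
  shows "AE x in M. u f x = c * f x"
proof -
  obtain K where K: "K \<ge> 0" "\<And>f. f \<in> Lfun M n \<Longrightarrow> Ni (u f) \<le> K * Ni f"
    using bop_K[OF u] by blast
  define Kc where "Kc = 2 ^ n * (K + \<bar>c\<bar> ^ n) + 1"
  have "0 \<le> 2 ^ n * (K + \<bar>c\<bar> ^ n)" using K(1) by simp
  then have Kc: "Kc > 0" unfolding Kc_def by linarith
  have ufL: "u f \<in> Lfun M n" by (rule bop_Lfun[OF u f])
  have fL: "(\<lambda>x. u f x - c * f x) \<in> Lfun M n" by (rule Lfun_diff[OF ufL Lfun_scale[OF f]])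
  have "AE x in M. u f x - c * f x = 0"
  proof (rule Ni_zero_eps[OF fL])
    fix e :: real assume e: "e > 0"
    obtain g where g: "g \<in> Lfun M n" "AE x in M. u g x = c * g x" "Ni (\<lambda>x. f x - g x) \<le> e / Kc"
      using appr[of "e / Kc"] e Kc by auto
    define d where "d = (\<lambda>x. f x - g x)"
    have dL: "d \<in> Lfun M n" unfolding d_def by (rule Lfun_diff[OF f g(1)])
    have udL: "u d \<in> Lfun M n" by (rule bop_Lfun[OF u dL])
    have "AE x in M. u d x = u f x - u g x" unfolding d_def by (rule bop_diff[OF u f g(1)])
    then have ae: "AE x in M. u f x - c * f x = u d x + (- c) * d x"
      using g(2) by eventually_elim (simp add: d_def algebra_simps)
    have "Ni (\<lambda>x. u f x - c * f x) = Ni (\<lambda>x. u d x + (- c) * d x)"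
      by (rule Ni_cong[OF Lfun_meas[OF fL] _ ae]) (use Lfun_meas[OF udL] Lfun_meas[OF dL] in measurable)
    also have "\<dots> \<le> 2 ^ n * (Ni (u d) + Ni (\<lambda>x. (- c) * d x))"
      by (rule Ni_tri[OF udL Lfun_scale[OF dL]])
    also have "\<dots> \<le> 2 ^ n * (K * Ni d + \<bar>c\<bar> ^ n * Ni d)"
      using K(2)[OF dL] Ni_scale[of "- c" d] by simp
    also have "\<dots> = (Kc - 1) * Ni d" unfolding Kc_def by (simp add: algebra_simps)
    also have "\<dots> \<le> Kc * Ni d" using Ni_nonneg[of d] by (simp add: algebra_simps)
    also have "\<dots> \<le> Kc * (e / Kc)" using g(3) Kc unfolding d_def by (intro mult_left_mono) simp_all
    also have "\<dots> = e" using Kc by simp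
    finally show "Ni (\<lambda>x. u f x - c * f x) \<le> e" .
  qed
  then show ?thesis by eventually_elim simp
qed

lemma ce_bidem:
  assumes F: "subalgebra M F"
  shows "bounded_idempotent M n (cond_exp_op M F)"
proof -
  interpret sigma_finite_subalgebra M F by (rule sfs_of_subalg[OF prob_space_axioms F])
  have A: "\<forall>f\<in>Lfun M n. real_cond_exp M F f \<in> Lfun M n" using ce_Lfun(1)[OF F] by blast
  have B: "\<forall>f\<in>Lfun M n. \<forall>g\<in>Lfun M n. (AE x in M. f x = g x) \<longrightarrow>
      (AE x in M. real_cond_exp M F f x = real_cond_exp M F g x)"
  proof (intro ballI impI)
    fix f g assume "f \<in> Lfun M n" "g \<in> Lfun M n" "AE x in M. f x = g x"
    then show "AE x in M. real_cond_exp M F f x = real_cond_exp M F g x"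
      by (intro real_cond_exp_cong) (simp_all add: Lfun_def)
  qed
  have C: "AE x in M. real_cond_exp M F (\<lambda>y. c * f y + g y) x = c * real_cond_exp M F f x + real_cond_exp M F g x"
    if f: "f \<in> Lfun M n" and g: "g \<in> Lfun M n" for f g c
  proof -
    have fi: "integrable M f" "integrable M g" using Lfun_int f g by auto
    have "AE x in M. real_cond_exp M F (\<lambda>y. c * f y + g y) x = real_cond_exp M F (\<lambda>y. c * f y) x + real_cond_exp M F g x"
      by (rule real_cond_exp_add) (use fi in auto)
    moreover have "AE x in M. real_cond_exp M F (\<lambda>y. c * f y) x = c * real_cond_exp M F f x"
      by (rule real_cond_exp_cmult[OF fi(1)])
    ultimately show ?thesis by eventually_elim simp
  qed
  have D: "\<forall>f\<in>Lfun M n. Lnorm M n (real_cond_exp M F f) \<le> 1 * Lnorm M n f"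
    using ce_Lfun(2)[OF F] Lnorm_mono by simp
  have E: "op_eq M n (real_cond_exp M F \<circ> real_cond_exp M F) (real_cond_exp M F)"
    unfolding op_eq_def
  proof
    fix f assume f: "f \<in> Lfun M n"
    have "integrable M (real_cond_exp M F f)" using Lfun_int[OF f] by (rule real_cond_exp_int(1))
    then show "AE x in M. (real_cond_exp M F \<circ> real_cond_exp M F) f x = real_cond_exp M F f x"
      by (simp add: real_cond_exp_F_meas)
  qed
  show ?thesis
    unfolding bounded_idempotent_def bounded_op_def cond_exp_op_def
    using A B C D E by blast
qed


lemma dynkin_int0:
  fixes \<phi> :: "'a \<Rightarrow> real"
  assumes phi: "integrable M \<phi>" and G: "G \<subseteq> sets M" "Int_stable G"
    and sp: "(\<integral>x. \<phi> x \<partial>M) = 0"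
    and base: "\<And>A. A \<in> G \<Longrightarrow> (\<integral>x\<in>A. \<phi> x \<partial>M) = 0"
    and A: "A \<in> sigma_sets (space M) G"
  shows "(\<integral>x\<in>A. \<phi> x \<partial>M) = 0"
proof -
  have sub: "sigma_sets (space M) G \<subseteq> sets M" by (rule sets.sigma_sets_subset[OF G(1)])
  have si: "\<And>B. B \<in> sets M \<Longrightarrow> set_integrable M B \<phi>"
    unfolding set_integrable_def by (rule integrable_mult_indicator[OF _ phi])
  have Gp: "G \<subseteq> Pow (space M)" using G(1) sets.sets_into_space by auto
  show ?thesis
  using G(2) Gp A
  proof (induct rule: sigma_sets_induct_disjoint)
    case (basic A) then show ?case by (rule base)
  next
    case empty then show ?case by (simp add: set_lebesgue_integral_def)
  next
    case (compl A)
    have AM: "A \<in> sets M" using compl(1) sub by blast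
    then have AS: "A \<subseteq> space M" by (rule sets.sets_into_space)
    have "(\<integral>x\<in>(space M - A) \<union> A. \<phi> x \<partial>M) = (\<integral>x\<in>space M - A. \<phi> x \<partial>M) + (\<integral>x\<in>A. \<phi> x \<partial>M)"
      by (rule set_integral_Un) (auto intro!: si AM)
    moreover have "(space M - A) \<union> A = space M" using AS by blast
    ultimately show ?case using compl(2) set_integral_space[OF phi] sp by simp
  next
    case (union A)
    have AM: "\<And>i. A i \<in> sets M" using union(2) sub by blast
    have "(\<integral>x\<in>(\<Union>i. A i). \<phi> x \<partial>M) = (\<Sum>i. (\<integral>x\<in>A i. \<phi> x \<partial>M))"
    proof (rule lebesgue_integral_countable_add)
      show "\<And>i. A i \<in> sets M" by (rule AM)
      show "\<And>i j. i \<noteq> j \<Longrightarrow> A i \<inter> A j = {}" using union(1) by (simp add: disjoint_family_on_def)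
      show "set_integrable M (\<Union>i. A i) \<phi>" using AM by (intro si) blast
    qed
    also have "\<dots> = 0" using union(3) by simp
    finally show ?case .
  qed
qed

lemma bop_zero:
  assumes "bounded_op M n u"
  shows "AE x in M. u (\<lambda>y. 0) x = 0"
  using bop_diff[OF assms Lfun_zero Lfun_zero] by simp

lemma fix_sum:
  assumes u: "bounded_op M n u" and S: "finite S"
    and g: "\<And>y. y \<in> S \<Longrightarrow> g y \<in> Lfun M n \<and> (AE x in M. u (g y) x = g y x)"
  shows "(\<lambda>x. \<Sum>y\<in>S. g y x) \<in> Lfun M n \<and> (AE x in M. u (\<lambda>x. \<Sum>y\<in>S. g y x) x = (\<Sum>y\<in>S. g y x))"
  using S g
proof (induct S rule: finite_induct)
  case empty then show ?case using bop_zero[OF u] Lfun_zero by simp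
next
  case (insert a S)
  have IH: "(\<lambda>x. \<Sum>y\<in>S. g y x) \<in> Lfun M n" "AE x in M. u (\<lambda>x. \<Sum>y\<in>S. g y x) x = (\<Sum>y\<in>S. g y x)"
    using insert by auto
  have ga: "g a \<in> Lfun M n" "AE x in M. u (g a) x = g a x" using insert(4)[of a] by auto
  have eq: "(\<lambda>x. \<Sum>y\<in>insert a S. g y x) = (\<lambda>x. g a x + (\<Sum>y\<in>S. g y x))"
    using insert(1,2) by auto
  have "AE x in M. u (\<lambda>x. g a x + (\<Sum>y\<in>S. g y x)) x = u (g a) x + u (\<lambda>x. \<Sum>y\<in>S. g y x) x"
    by (rule bop_add[OF u ga(1) IH(1)])
  then have "AE x in M. u (\<lambda>x. g a x + (\<Sum>y\<in>S. g y x)) x = g a x + (\<Sum>y\<in>S. g y x)"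
    using ga(2) IH(2) by eventually_elim simp
  moreover have "(\<lambda>x. g a x + (\<Sum>y\<in>S. g y x)) \<in> Lfun M n" by (rule Lfun_add[OF ga(1) IH(1)])
  ultimately show ?case unfolding eq using insert(1,2) by simp
qed

lemma Lfun_indicator: "A \<in> sets M \<Longrightarrow> (indicator A :: 'a \<Rightarrow> real) \<in> Lfun M n"
  by (rule Lfun_bounded[where K=1]) (auto simp: indicator_def)

lemma fix_indicator_sigma:
  assumes u: "bounded_op M n u" and G: "G \<subseteq> sets M" "Int_stable G" "space M \<in> G"
    and base: "\<And>A. A \<in> G \<Longrightarrow> AE x in M. u (indicator A) x = (indicator A x :: real)"
    and A: "A \<in> sigma_sets (space M) G"
  shows "AE x in M. u (indicator A) x = (indicator A x :: real)"
proof -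
  have sub: "sigma_sets (space M) G \<subseteq> sets M" by (rule sets.sigma_sets_subset[OF G(1)])
  have Gp: "G \<subseteq> Pow (space M)" using G(1) sets.sets_into_space by auto
  show ?thesis
  using G(2) Gp A
  proof (induct rule: sigma_sets_induct_disjoint)
    case (basic A) then show ?case by (rule base)
  next
    case empty
    have "(indicator {} :: 'a \<Rightarrow> real) = (\<lambda>y. 0)" by (simp add: fun_eq_iff)
    then show ?case using bop_zero[OF u] by simp
  next
    case (compl A)
    have AM: "A \<in> sets M" using compl(1) sub by blast
    then have AS: "A \<subseteq> space M" by (rule sets.sets_into_space)
    have eq: "(indicator (space M - A) :: 'a \<Rightarrow> real) = (\<lambda>y. indicator (space M) y - indicator A y)"
      using AS by (auto simp: fun_eq_iff indicator_def)
    have "AE x in M. u (\<lambda>y. indicator (space M) y - indicator A y) x = u (indicator (space M)) x - u (indicator A) x"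
      by (rule bop_diff[OF u Lfun_indicator Lfun_indicator]) (simp_all add: AM)
    then show ?case unfolding eq using compl(2) base[OF G(3)] by eventually_elim simp
  next
    case (union A)
    have AM: "\<And>i. A i \<in> sets M" using union(2) sub by blast
    define B where "B N = (\<Union>i\<in>{..<N}. A i)" for N
    have BM: "B N \<in> sets M" for N unfolding B_def using AM by blast
    have UM: "(\<Union>i. A i) \<in> sets M" using AM by blast
    have BU: "(\<Union>N. B N) = (\<Union>i. A i)" unfolding B_def by blast
    have incB: "incseq B" unfolding B_def incseq_def by (auto intro: less_le_trans)
    have Bfix: "AE x in M. u (indicator (B N)) x = (indicator (B N) x :: real)" for N
    proof -
      have eq: "(indicator (B N) :: 'a \<Rightarrow> real) = (\<lambda>x. \<Sum>i\<in>{..<N}. indicator (A i) x)"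
        unfolding B_def using union(1)
        by (intro ext indicator_UN_disjoint) (auto simp: disjoint_family_on_def)
      show ?thesis unfolding eq
        by (rule conjunct2[OF fix_sum[OF u]]) (simp_all add: Lfun_indicator AM union(3))
    qed
    have lim: "(\<lambda>N. measure M (B N)) \<longlonglongrightarrow> measure M (\<Union>i. A i)"
      using finite_Lim_measure_incseq[of B] BM incB BU by auto
    show ?case
    proof (rule bop_approx[OF u Lfun_indicator[OF UM], of 1, simplified])
      fix e :: real assume e: "e > 0"
      obtain N where N: "dist (measure M (B N)) (measure M (\<Union>i. A i)) < e"
        using lim e unfolding lim_sequentially by blast
      have "Ni (\<lambda>x. indicator (\<Union>i. A i) x - indicator (B N) x) = Ni (indicator ((\<Union>i. A i) - B N))"
      proof -
        have "B N \<subseteq> (\<Union>i. A i)" unfolding B_def by blast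
        then have "(\<lambda>x. indicator (\<Union>i. A i) x - indicator (B N) x) = (indicator ((\<Union>i. A i) - B N) :: 'a \<Rightarrow> real)"
          by (auto simp: fun_eq_iff indicator_def)
        then show ?thesis by simp
      qed
      also have "\<dots> = measure M ((\<Union>i. A i) - B N)"
      proof -
        have "\<And>x. \<bar>indicator ((\<Union>i. A i) - B N) x\<bar> ^ n = (indicator ((\<Union>i. A i) - B N) x :: real)"
          using n1 by (auto simp: indicator_def)
        then have "Ni (indicator ((\<Union>i. A i) - B N)) = (\<integral>x. indicator ((\<Union>i. A i) - B N) x \<partial>M)"
          unfolding Ni_def by simp
        also have "\<dots> = measure M ((\<Union>i. A i) - B N)"
          using sets.sets_into_space[OF UM] by (simp add: Int_absorb2 Diff_subset[THEN order_trans])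
        finally show ?thesis .
      qed
      also have "\<dots> = measure M (\<Union>i. A i) - measure M (B N)"
        by (rule measure_Diff) (use BM UM in \<open>auto simp: B_def\<close>)
      also have "\<dots> \<le> e" using N by (simp add: dist_real_def)
      finally show "\<exists>g\<in>Lfun M n. (AE x in M. u g x = g x) \<and> Ni (\<lambda>x. indicator (\<Union>i. A i) x - g x) \<le> e"
        using Lfun_indicator[OF BM] Bfix by blast
    qed
  qed
qed


lemma fix_simple:
  assumes u: "bounded_op M n u" and F: "subalgebra M F"
    and ind: "\<And>A. A \<in> sets F \<Longrightarrow> AE x in M. u (indicator A) x = (indicator A x :: real)"
    and s: "simple_function F s"
  shows "s \<in> Lfun M n \<and> (AE x in M. u s x = (s x :: real))"
proof -
  have spF: "space F = space M" using F by (simp add: subalgebra_def)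
  have setsF: "sets F \<subseteq> sets M" using F by (simp add: subalgebra_def)
  define g where "g y = (\<lambda>x. y * indicator (s -` {y} \<inter> space F) x)" for y :: real
  have fin: "finite (s ` space F)" by (rule simple_functionD(1)[OF s])
  have g: "g y \<in> Lfun M n \<and> (AE x in M. u (g y) x = g y x)" for y
  proof -
    have AF: "s -` {y} \<inter> space F \<in> sets F" by (rule simple_functionD(2)[OF s])
    then have AM: "s -` {y} \<inter> space F \<in> sets M" using setsF by blast
    have L: "indicator (s -` {y} \<inter> space F) \<in> Lfun M n" by (rule Lfun_indicator[OF AM])
    have "AE x in M. u (g y) x = y * u (indicator (s -` {y} \<inter> space F)) x"
      unfolding g_def by (rule bop_scale[OF u L])
    then have "AE x in M. u (g y) x = g y x"
      using ind[OF AF] by eventually_elim (simp add: g_def)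
    then show ?thesis using Lfun_scale[OF L] by (simp add: g_def)
  qed
  have R: "(\<lambda>x. \<Sum>y\<in>s ` space F. g y x) \<in> Lfun M n \<and>
      (AE x in M. u (\<lambda>x. \<Sum>y\<in>s ` space F. g y x) x = (\<Sum>y\<in>s ` space F. g y x))"
    by (rule fix_sum[OF u fin g])
  have rep: "s x = (\<Sum>y\<in>s ` space F. g y x)" if "x \<in> space M" for x
  proof -
    have "s x = (\<Sum>y\<in>s ` space F. indicator (s -` {y} \<inter> space F) x *\<^sub>R y)"
      by (rule simple_function_indicator_representation_banach[OF s]) (simp add: spF that)
    also have "\<dots> = (\<Sum>y\<in>s ` space F. g y x)"
      unfolding g_def by (intro sum.cong refl) simp
    finally show ?thesis .
  qed
  have sM: "s \<in> borel_measurable M"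
    by (rule measurable_from_subalg[OF F borel_measurable_simple_function[OF s]])
  have aer: "AE x in M. (\<Sum>y\<in>s ` space F. g y x) = s x" using rep by (intro AE_I2) simp
  have sL: "s \<in> Lfun M n" by (rule Lfun_cong[OF conjunct1[OF R] sM aer])
  have "AE x in M. u (\<lambda>x. \<Sum>y\<in>s ` space F. g y x) x = u s x"
    by (rule bop_cong[OF u conjunct1[OF R] sL aer])
  then have "AE x in M. u s x = s x" using conjunct2[OF R] aer by eventually_elim simp
  then show ?thesis using sL by simp
qed

lemma fix_meas:
  assumes u: "bounded_op M n u" and F: "subalgebra M F"
    and ind: "\<And>A. A \<in> sets F \<Longrightarrow> AE x in M. u (indicator A) x = (indicator A x :: real)"
    and h: "h \<in> Lfun M n" "h \<in> borel_measurable F"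
  shows "AE x in M. u h x = h x"
proof -
  have spF: "space F = space M" using F by (simp add: subalgebra_def)
  obtain S where S: "\<And>i. simple_function F (S i)" "\<And>x. x \<in> space F \<Longrightarrow> (\<lambda>i. S i x) \<longlonglongrightarrow> h x"
    "\<And>i x. x \<in> space F \<Longrightarrow> dist (S i x) 0 \<le> 2 * dist (h x) 0"
    using borel_measurable_implies_sequence_metric[OF h(2), of 0] by blast
  have SM: "S i \<in> borel_measurable M" for i
    by (rule measurable_from_subalg[OF F borel_measurable_simple_function[OF S(1)]])
  have hM: "h \<in> borel_measurable M" by (rule Lfun_meas[OF h(1)])
  have hi: "integrable M (\<lambda>x. \<bar>h x\<bar> ^ n)" by (rule Lfun_Ni_int[OF h(1)])
  have lim: "(\<lambda>i. Ni (\<lambda>x. h x - S i x)) \<longlonglongrightarrow> Ni (\<lambda>x. 0)"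
    unfolding Ni_def
  proof (rule integral_dominated_convergence[where w="\<lambda>x. 3 ^ n * \<bar>h x\<bar> ^ n"])
    show "(\<lambda>x. \<bar>0::real\<bar> ^ n) \<in> borel_measurable M" by simp
    show "(\<lambda>x. \<bar>h x - S i x\<bar> ^ n) \<in> borel_measurable M" for i using hM SM[of i] by measurable
    show "integrable M (\<lambda>x. 3 ^ n * \<bar>h x\<bar> ^ n)" using hi by (rule integrable_mult_right)
    show "AE x in M. (\<lambda>i. \<bar>h x - S i x\<bar> ^ n) \<longlonglongrightarrow> \<bar>0::real\<bar> ^ n"
    proof (intro AE_I2)
      fix x assume x: "x \<in> space M"
      have "(\<lambda>i. h x - S i x) \<longlonglongrightarrow> h x - h x" using S(2)[of x] x spF by (intro tendsto_intros) auto
      then have "(\<lambda>i. \<bar>h x - S i x\<bar> ^ n) \<longlonglongrightarrow> \<bar>h x - h x\<bar> ^ n" by (intro tendsto_power tendsto_rabs)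
      then show "(\<lambda>i. \<bar>h x - S i x\<bar> ^ n) \<longlonglongrightarrow> \<bar>0::real\<bar> ^ n" by simp
    qed
    show "AE x in M. norm (\<bar>h x - S i x\<bar> ^ n) \<le> 3 ^ n * \<bar>h x\<bar> ^ n" for i
    proof (intro AE_I2)
      fix x assume x: "x \<in> space M"
      have "\<bar>S i x\<bar> \<le> 2 * \<bar>h x\<bar>" using S(3)[of x i] x spF by (simp add: dist_real_def)
      then have "\<bar>h x - S i x\<bar> \<le> 3 * \<bar>h x\<bar>" by linarith
      then have "\<bar>h x - S i x\<bar> ^ n \<le> (3 * \<bar>h x\<bar>) ^ n" by (intro power_mono) simp_all
      then show "norm (\<bar>h x - S i x\<bar> ^ n) \<le> 3 ^ n * \<bar>h x\<bar> ^ n" by (simp add: power_mult_distrib)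
    qed
  qed
  have N0: "Ni (\<lambda>x. 0) = 0" unfolding Ni_def using n1 by simp
  show ?thesis
  proof (rule bop_approx[OF u h(1), of 1, simplified])
    fix e :: real assume e: "e > 0"
    obtain i where "norm (Ni (\<lambda>x. h x - S i x) - Ni (\<lambda>x. 0)) < e"
      using LIMSEQ_D[OF lim e] by blast
    then have "Ni (\<lambda>x. h x - S i x) \<le> e" unfolding N0 by simp
    moreover have "S i \<in> Lfun M n \<and> (AE x in M. u (S i) x = S i x)"
      by (rule fix_simple[OF u F ind S(1)])
    ultimately show "\<exists>g\<in>Lfun M n. (AE x in M. u g x = g x) \<and> Ni (\<lambda>x. h x - g x) \<le> e" by blast
  qed
qed


lemma ce_le:
  assumes F: "subalgebra M F" and G: "subalgebra M G" and FG: "sets F \<subseteq> sets G"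
  shows "idem_le M n (real_cond_exp M F) (real_cond_exp M G)"
proof -
  interpret Fs: sigma_finite_subalgebra M F by (rule sfs_of_subalg[OF prob_space_axioms F])
  interpret Gs: sigma_finite_subalgebra M G by (rule sfs_of_subalg[OF prob_space_axioms G])
  have GF: "subalgebra G F" using F G FG by (simp add: subalgebra_def)
  have 1: "op_eq M n (real_cond_exp M F \<circ> real_cond_exp M G) (real_cond_exp M F)"
    unfolding op_eq_def
  proof
    fix f assume f: "f \<in> Lfun M n"
    show "AE x in M. (real_cond_exp M F \<circ> real_cond_exp M G) f x = real_cond_exp M F f x"
      using Fs.real_cond_exp_nested_subalg[OF G GF Lfun_int[OF f]] by simp
  qed
  have 2: "op_eq M n (real_cond_exp M G \<circ> real_cond_exp M F) (real_cond_exp M F)"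
    unfolding op_eq_def
  proof
    fix f assume f: "f \<in> Lfun M n"
    have i: "integrable M (real_cond_exp M F f)" by (rule Fs.real_cond_exp_int(1)[OF Lfun_int[OF f]])
    have m: "real_cond_exp M F f \<in> borel_measurable G"
      by (rule measurable_from_subalg[OF GF borel_measurable_cond_exp])
    show "AE x in M. (real_cond_exp M G \<circ> real_cond_exp M F) f x = real_cond_exp M F f x"
      using Gs.real_cond_exp_F_meas[OF i m] by simp
  qed
  show ?thesis using 1 2 by (simp add: idem_le_def)
qed

lemma set_integral_AE0:
  fixes \<phi> :: "'a \<Rightarrow> real"
  assumes "\<phi> \<in> borel_measurable M" "A \<in> sets M" "AE x in M. \<phi> x = 0"
  shows "(\<integral>x\<in>A. \<phi> x \<partial>M) = 0"
proof -
  have "(\<integral>x\<in>A. \<phi> x \<partial>M) = (\<integral>x. 0 \<partial>M)"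
    unfolding set_lebesgue_integral_def using assms
    by (intro integral_cong_AE) (auto elim: eventually_mono)
  then show ?thesis by simp
qed

lemma sup_part:
  assumes I: "directed_set I le" and B: "\<forall>i\<in>I. subalgebra M (B i)"
    and mono: "\<forall>i\<in>I. \<forall>j\<in>I. le i j \<longrightarrow> sets (B i) \<subseteq> sets (B j)"
  shows "is_sup_idem M n (cond_exp_op M ` B ` I) (cond_exp_op M (join_sa M I B))"
proof -
  define J where "J = join_sa M I B"
  define G where "G = (\<Union>i\<in>I. sets (B i))"
  have GM: "G \<subseteq> sets M" using B unfolding G_def subalgebra_def by blast
  have GP: "G \<subseteq> Pow (space M)" using GM sets.sets_into_space by blast
  have setsJ: "sets J = sigma_sets (space M) G" unfolding J_def join_sa_def G_def[symmetric]
    using GP by (rule sets_measure_of)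
  have spJ: "space J = space M" unfolding J_def join_sa_def G_def[symmetric]
    using GP by (rule space_measure_of)
  have JM: "subalgebra M J" unfolding subalgebra_def using spJ setsJ sets.sigma_sets_subset[OF GM] by simp
  have BJ: "sets (B i) \<subseteq> sets J" if "i \<in> I" for i
    using that unfolding setsJ G_def by (auto intro: sigma_sets.Basic)
  have Ine: "I \<noteq> {}" using I by (simp add: directed_set_def)
  then obtain i0 where i0: "i0 \<in> I" by blast
  have spG: "space M \<in> G" unfolding G_def using i0 B
    by (metis UN_I sets.top subalgebra_def)
  have IS: "Int_stable G"
  proof (rule Int_stableI)
    fix a b assume "a \<in> G" "b \<in> G"
    then obtain i j where ij: "i \<in> I" "j \<in> I" "a \<in> sets (B i)" "b \<in> sets (B j)" unfolding G_def by blast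
    obtain k where k: "k \<in> I" "le i k" "le j k" using I ij(1,2) unfolding directed_set_def by blast
    have "a \<in> sets (B k)" "b \<in> sets (B k)" using mono ij k by blast+
    then have "a \<inter> b \<in> sets (B k)" by blast
    then show "a \<inter> b \<in> G" unfolding G_def using k(1) by blast
  qed
  interpret Js: sigma_finite_subalgebra M J by (rule sfs_of_subalg[OF prob_space_axioms JM])
  have bid: "bounded_idempotent M n (cond_exp_op M J)" by (rule ce_bidem[OF JM])
  have le1: "\<forall>a\<in>cond_exp_op M ` B ` I. idem_le M n a (cond_exp_op M J)"
  proof
    fix a assume "a \<in> cond_exp_op M ` B ` I"
    then obtain i where i: "i \<in> I" "a = cond_exp_op M (B i)" by blast
    show "idem_le M n a (cond_exp_op M J)"
      unfolding i(2) cond_exp_op_def using ce_le[OF _ JM BJ[OF i(1)]] B i(1) by blast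
  qed
  have le2: "idem_le M n (cond_exp_op M J) u"
    if u: "bounded_idempotent M n u" and ub: "\<forall>a\<in>cond_exp_op M ` B ` I. idem_le M n a u" for u
  proof -
    have ubo: "bounded_op M n u" using u by (simp add: bounded_idempotent_def)
    have ubi: "op_eq M n (real_cond_exp M (B i) \<circ> u) (real_cond_exp M (B i))"
      "op_eq M n (u \<circ> real_cond_exp M (B i)) (real_cond_exp M (B i))" if "i \<in> I" for i
      using ub that unfolding idem_le_def cond_exp_op_def by auto
    have A: "op_eq M n (u \<circ> real_cond_exp M J) (real_cond_exp M J)"
      unfolding op_eq_def
    proof
      fix f assume f: "f \<in> Lfun M n"
      have indG: "AE x in M. u (indicator A) x = (indicator A x :: real)" if A: "A \<in> G" for A
      proof -
        obtain i where i: "i \<in> I" "A \<in> sets (B i)" using A unfolding G_def by blast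
        interpret Bs: sigma_finite_subalgebra M "B i" by (rule sfs_of_subalg[OF prob_space_axioms]) (use B i in blast)
        have AM: "A \<in> sets M" using GM A by blast
        have indL: "(indicator A :: 'a \<Rightarrow> real) \<in> Lfun M n" by (rule Lfun_indicator[OF AM])
        have e1: "AE x in M. real_cond_exp M (B i) (indicator A) x = (indicator A x :: real)"
          by (rule Bs.real_cond_exp_F_meas) (use AM i(2) Lfun_int[OF indL] in auto)
        have eL: "real_cond_exp M (B i) (indicator A) \<in> Lfun M n"
          by (rule ce_Lfun(1)[OF _ indL]) (use B i in blast)
        have "AE x in M. u (real_cond_exp M (B i) (indicator A)) x = u (indicator A) x"
          by (rule bop_cong[OF ubo eL indL e1])
        moreover have "AE x in M. u (real_cond_exp M (B i) (indicator A)) x = real_cond_exp M (B i) (indicator A) x"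
          using ubi(2)[OF i(1)] indL unfolding op_eq_def by auto
        ultimately show ?thesis using e1 by eventually_elim simp
      qed
      have indJ: "AE x in M. u (indicator A) x = (indicator A x :: real)" if AJ: "A \<in> sets J" for A
      proof -
        have Asig: "A \<in> sigma_sets (space M) G" using AJ setsJ by simp
        note r = fix_indicator_sigma[OF ubo GM IS spG]
        show ?thesis by (rule r[OF indG Asig])
      qed
      have hL: "real_cond_exp M J f \<in> Lfun M n" by (rule ce_Lfun(1)[OF JM f])
      have "AE x in M. u (real_cond_exp M J f) x = real_cond_exp M J f x"
        by (rule fix_meas[OF ubo JM indJ hL borel_measurable_cond_exp])
      then show "AE x in M. (u \<circ> real_cond_exp M J) f x = real_cond_exp M J f x" by simp
    qed
    have Bq: "op_eq M n (real_cond_exp M J \<circ> u) (real_cond_exp M J)"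
      unfolding op_eq_def
    proof
      fix f assume f: "f \<in> Lfun M n"
      have ufL: "u f \<in> Lfun M n" by (rule bop_Lfun[OF ubo f])
      define g where "g = (\<lambda>x. u f x - f x)"
      have gL: "g \<in> Lfun M n" unfolding g_def by (rule Lfun_diff[OF ufL f])
      have gi: "integrable M g" by (rule Lfun_int[OF gL])
      have base: "(\<integral>x\<in>A. g x \<partial>M) = 0" if A: "A \<in> G" for A
      proof -
        obtain i where i: "i \<in> I" "A \<in> sets (B i)" using A unfolding G_def by blast
        interpret Bs: sigma_finite_subalgebra M "B i" by (rule sfs_of_subalg[OF prob_space_axioms]) (use B i in blast)
        have AM: "A \<in> sets M" using GM A by blast
        have "AE x in M. real_cond_exp M (B i) g x = real_cond_exp M (B i) (u f) x - real_cond_exp M (B i) f x"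
          unfolding g_def by (rule Bs.real_cond_exp_diff[OF Lfun_int[OF ufL] Lfun_int[OF f]])
        moreover have "AE x in M. real_cond_exp M (B i) (u f) x = real_cond_exp M (B i) f x"
          using ubi(1)[OF i(1)] f unfolding op_eq_def by auto
        ultimately have z: "AE x in M. real_cond_exp M (B i) g x = 0" by eventually_elim simp
        have "(\<integral>x\<in>A. g x \<partial>M) = (\<integral>x\<in>A. real_cond_exp M (B i) g x \<partial>M)"
          by (rule Bs.real_cond_exp_intA[OF gi i(2)])
        also have "\<dots> = 0" by (rule set_integral_AE0[OF _ AM z]) simp
        finally show ?thesis .
      qed
      have sp0: "(\<integral>x. g x \<partial>M) = 0"
        using base[OF spG] set_integral_space[OF gi] by simp
      have allJ: "(\<integral>x\<in>A. g x \<partial>M) = (\<integral>x\<in>A. 0 \<partial>M)" if "A \<in> sets J" for A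
        using dynkin_int0[OF gi GM IS sp0 base] that setsJ by (simp add: set_lebesgue_integral_def)
      have "AE x in M. real_cond_exp M J g x = 0"
        by (rule Js.real_cond_exp_charact[OF allJ gi]) simp_all
      moreover have "AE x in M. real_cond_exp M J g x = real_cond_exp M J (u f) x - real_cond_exp M J f x"
        unfolding g_def by (rule Js.real_cond_exp_diff[OF Lfun_int[OF ufL] Lfun_int[OF f]])
      ultimately show "AE x in M. (real_cond_exp M J \<circ> u) f x = real_cond_exp M J f x"
        by eventually_elim simp
    qed
    show ?thesis unfolding idem_le_def cond_exp_op_def using A Bq by simp
  qed
  show ?thesis unfolding is_sup_idem_def J_def[symmetric] using bid le1 le2 by blast
qed

end

context LS begin

definition cl :: "'a measure \<Rightarrow> 'a measure" where
  "cl F = sigma (space M) (sets F \<union> null_sets M)"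

lemma cl_basic:
  assumes F: "subalgebra M F"
  shows "sets (cl F) = null_closure M F" "space (cl F) = space M" "subalgebra M (cl F)"
    "subalgebra (cl F) F" "sets F \<subseteq> sets (cl F)" "null_sets M \<subseteq> sets (cl F)"
proof -
  have FM: "sets F \<subseteq> sets M" using F by (simp add: subalgebra_def)
  have P: "sets F \<union> null_sets M \<subseteq> Pow (space M)"
    using FM sets.sets_into_space by blast
  show s: "sets (cl F) = null_closure M F" unfolding cl_def null_closure_def using P by (rule sets_measure_of)
  show sp: "space (cl F) = space M" unfolding cl_def using P by (rule space_measure_of)
  have sub: "null_closure M F \<subseteq> sets M" unfolding null_closure_def
    by (rule sets.sigma_sets_subset) (use FM in blast)
  show "subalgebra M (cl F)" unfolding subalgebra_def using s sp sub by simp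
  show "sets F \<subseteq> sets (cl F)" "null_sets M \<subseteq> sets (cl F)" unfolding s null_closure_def
    by (auto intro: sigma_sets.Basic)
  then show "subalgebra (cl F) F" unfolding subalgebra_def using sp F by (simp add: subalgebra_def)
qed

lemma meas_closure:
  fixes h g :: "'a \<Rightarrow> real"
  assumes F: "subalgebra M F" and hM: "h \<in> borel_measurable M" and gF: "g \<in> borel_measurable F"
    and ae: "AE x in M. h x = g x"
  shows "h \<in> borel_measurable (cl F)"
proof -
  have gM: "g \<in> borel_measurable M" by (rule measurable_from_subalg[OF F gF])
  have spF: "space F = space M" using F by (simp add: subalgebra_def)
  define N where "N = {x \<in> space M. \<not> (h x = g x)}"
  have [measurable]: "h \<in> borel_measurable M" "g \<in> borel_measurable M" using hM gM by simp_all
  have NM: "N \<in> sets M" unfolding N_def using borel_measurable_neq[OF hM gM] by simp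
  have Nn: "N \<in> null_sets M" using ae AE_iff_null[OF NM[unfolded N_def]] unfolding N_def by simp
  show ?thesis
  proof (rule measurableI)
    fix x show "h x \<in> space borel" by simp
  next
    fix S :: "real set" assume S: "S \<in> sets borel"
    have e: "h -` S \<inter> space (cl F) = ((g -` S \<inter> space F) - N) \<union> ((h -` S \<inter> space M) \<inter> N)"
      using cl_basic(2)[OF F] spF unfolding N_def by auto
    have 1: "g -` S \<inter> space F \<in> sets (cl F)"
      using measurable_sets[OF gF S] cl_basic(5)[OF F] by blast
    have 2: "N \<in> sets (cl F)" using Nn cl_basic(6)[OF F] by blast
    have 3: "(h -` S \<inter> space M) \<inter> N \<in> sets (cl F)"
    proof -
      have "(h -` S \<inter> space M) \<in> sets M" using measurable_sets[OF hM S] .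
      then have "N \<inter> (h -` S \<inter> space M) \<in> null_sets M" by (rule null_set_Int2[OF Nn])
      then show ?thesis using cl_basic(6)[OF F] by (simp add: Int_commute subset_iff)
    qed
    show "h -` S \<inter> space (cl F) \<in> sets (cl F)" unfolding e using 1 2 3 by blast
  qed
qed

lemma meas_meet:
  fixes h :: "'a \<Rightarrow> real"
  assumes I: "I \<noteq> {}" and C: "\<forall>i\<in>I. subalgebra M (C i)"
    and h: "\<And>i. i \<in> I \<Longrightarrow> h \<in> borel_measurable (cl (C i))"
  shows "h \<in> borel_measurable (meet_closure_sa M I C)"
proof -
  obtain i0 where i0: "i0 \<in> I" using I by blast
  have P: "(\<Inter>i\<in>I. null_closure M (C i)) \<subseteq> Pow (space M)"
  proof -
    have "(\<Inter>i\<in>I. null_closure M (C i)) \<subseteq> null_closure M (C i0)" using i0 by blast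
    also have "\<dots> = sets (cl (C i0))" using cl_basic(1) C i0 by simp
    also have "\<dots> \<subseteq> Pow (space M)" using sets.sets_into_space cl_basic(2) C i0 by fastforce
    finally show ?thesis .
  qed
  have s: "sets (meet_closure_sa M I C) = sigma_sets (space M) (\<Inter>i\<in>I. null_closure M (C i))"
    unfolding meet_closure_sa_def using P by (rule sets_measure_of)
  have sp: "space (meet_closure_sa M I C) = space M"
    unfolding meet_closure_sa_def using P by (rule space_measure_of)
  show ?thesis
  proof (rule measurableI)
    fix x show "h x \<in> space borel" by simp
  next
    fix S :: "real set" assume S: "S \<in> sets borel"
    have "h -` S \<inter> space M \<in> null_closure M (C i)" if i: "i \<in> I" for i
      using measurable_sets[OF h[OF i] S] cl_basic(1,2) C i by simp
    then have "h -` S \<inter> space M \<in> (\<Inter>i\<in>I. null_closure M (C i))" by blast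
    then show "h -` S \<inter> space (meet_closure_sa M I C) \<in> sets (meet_closure_sa M I C)"
      unfolding s sp by (rule sigma_sets.Basic)
  qed
qed

lemma meet_basic:
  assumes I: "I \<noteq> {}" and C: "\<forall>i\<in>I. subalgebra M (C i)"
  shows "subalgebra M (meet_closure_sa M I C)"
    "\<And>i. i \<in> I \<Longrightarrow> sets (meet_closure_sa M I C) \<subseteq> sets (cl (C i))"
proof -
  obtain i0 where i0: "i0 \<in> I" using I by blast
  have P: "(\<Inter>i\<in>I. null_closure M (C i)) \<subseteq> Pow (space M)"
  proof -
    have "(\<Inter>i\<in>I. null_closure M (C i)) \<subseteq> null_closure M (C i0)" using i0 by blast
    also have "\<dots> = sets (cl (C i0))" using cl_basic(1) C i0 by simp
    also have "\<dots> \<subseteq> Pow (space M)" using sets.sets_into_space cl_basic(2) C i0 by fastforce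
    finally show ?thesis .
  qed
  have s: "sets (meet_closure_sa M I C) = sigma_sets (space M) (\<Inter>i\<in>I. null_closure M (C i))"
    unfolding meet_closure_sa_def using P by (rule sets_measure_of)
  have sp: "space (meet_closure_sa M I C) = space M"
    unfolding meet_closure_sa_def using P by (rule space_measure_of)
  show sub: "sets (meet_closure_sa M I C) \<subseteq> sets (cl (C i))" if i: "i \<in> I" for i
  proof -
    have "(\<Inter>i\<in>I. null_closure M (C i)) \<subseteq> sets (cl (C i))" using cl_basic(1) C i by auto
    then have "sigma_sets (space (cl (C i))) (\<Inter>i\<in>I. null_closure M (C i)) \<subseteq> sets (cl (C i))"
      by (rule sets.sigma_sets_subset)
    then show ?thesis unfolding s using cl_basic(2) C i by simp
  qed
  have "sets (cl (C i0)) \<subseteq> sets M" using cl_basic(3) C i0 by (simp add: subalgebra_def)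
  then show "subalgebra M (meet_closure_sa M I C)"
    unfolding subalgebra_def using sp sub[OF i0] by simp
qed

lemma ce_closure:
  assumes F: "subalgebra M F" and f: "integrable M f"
  shows "AE x in M. real_cond_exp M (cl F) f x = real_cond_exp M F f x"
proof -
  interpret Fs: sigma_finite_subalgebra M F by (rule sfs_of_subalg[OF prob_space_axioms F])
  interpret Cs: sigma_finite_subalgebra M "cl F" by (rule sfs_of_subalg[OF prob_space_axioms cl_basic(3)[OF F]])
  have FM: "sets F \<subseteq> sets M" using F by (simp add: subalgebra_def)
  define \<phi> where "\<phi> x = f x - real_cond_exp M F f x" for x
  have ei: "integrable M (real_cond_exp M F f)" by (rule Fs.real_cond_exp_int(1)[OF f])
  have phi: "integrable M \<phi>" unfolding \<phi>_def using f ei by (rule Bochner_Integration.integrable_diff)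
  have GM: "sets F \<union> null_sets M \<subseteq> sets M" using FM by auto
  have IS: "Int_stable (sets F \<union> null_sets M)"
  proof (rule Int_stableI)
    fix a b assume a: "a \<in> sets F \<union> null_sets M" and b: "b \<in> sets F \<union> null_sets M"
    have aM: "a \<in> sets M" using GM a by (rule subsetD)
    have bM: "b \<in> sets M" using GM b by (rule subsetD)
    show "a \<inter> b \<in> sets F \<union> null_sets M"
    proof (cases "a \<in> null_sets M")
      case True
      then have "a \<inter> b \<in> null_sets M" by (rule null_set_Int2[OF _ bM])
      then show ?thesis by (rule UnI2)
    next
      case False
      then have aF: "a \<in> sets F" using a by simp
      show ?thesis
      proof (cases "b \<in> null_sets M")
        case True
        then have "a \<inter> b \<in> null_sets M" by (rule null_set_Int1[OF _ aM])
        then show ?thesis by (rule UnI2)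
      next
        case False
        then have bF: "b \<in> sets F" using b by simp
        have "a \<inter> b \<in> sets F" using aF bF by (rule sets.Int)
        then show ?thesis by (rule UnI1)
      qed
    qed
  qed
  have si: "\<And>B. B \<in> sets M \<Longrightarrow> set_integrable M B g" if "integrable M g" for g :: "'a \<Rightarrow> real"
    unfolding set_integrable_def using that by (intro integrable_mult_indicator)
  have sp0: "(\<integral>x. \<phi> x \<partial>M) = 0"
    unfolding \<phi>_def using f ei Fs.real_cond_exp_int(2)[OF f] by simp
  have base: "(\<integral>x\<in>A. \<phi> x \<partial>M) = 0" if A: "A \<in> sets F \<union> null_sets M" for A
  proof (cases "A \<in> sets F")
    case True
    have AM: "A \<in> sets M" using True FM by blast
    have "(\<integral>x\<in>A. \<phi> x \<partial>M) = (\<integral>x\<in>A. f x \<partial>M) - (\<integral>x\<in>A. real_cond_exp M F f x \<partial>M)"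
      unfolding \<phi>_def by (rule set_integral_diff(2)) (use si[OF f AM] si[OF ei AM] in auto)
    also have "\<dots> = 0" using Fs.real_cond_exp_intA[OF f True] by simp
    finally show ?thesis .
  next
    case False
    then have An: "A \<in> null_sets M" using A by blast
    have "(\<integral>x\<in>A. \<phi> x \<partial>M) = (\<integral>x. 0 \<partial>M)" unfolding set_lebesgue_integral_def
    proof (rule integral_cong_AE)
      show "(\<lambda>x. indicator A x *\<^sub>R \<phi> x) \<in> borel_measurable M"
        using phi An by (intro borel_measurable_scaleR borel_measurable_indicator) auto
      show "AE x in M. indicator A x *\<^sub>R \<phi> x = 0" using AE_not_in[OF An] by eventually_elim simp
    qed simp
    then show ?thesis by simp
  qed
  have all: "(\<integral>x\<in>A. f x \<partial>M) = (\<integral>x\<in>A. real_cond_exp M F f x \<partial>M)" if A: "A \<in> sets (cl F)" for A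
  proof -
    have As: "A \<in> sigma_sets (space M) (sets F \<union> null_sets M)" using A cl_basic(1)[OF F] by (simp add: null_closure_def)
    have z: "(\<integral>x\<in>A. \<phi> x \<partial>M) = 0" by (rule dynkin_int0[OF phi GM IS sp0 base As])
    have AM: "A \<in> sets M" using A cl_basic(3)[OF F] by (auto simp: subalgebra_def)
    have "(\<integral>x\<in>A. \<phi> x \<partial>M) = (\<integral>x\<in>A. f x \<partial>M) - (\<integral>x\<in>A. real_cond_exp M F f x \<partial>M)"
      unfolding \<phi>_def by (rule set_integral_diff(2)) (use si[OF f AM] si[OF ei AM] in auto)
    then show ?thesis using z by simp
  qed
  show ?thesis
  proof (rule Cs.real_cond_exp_charact[OF all f ei])
    show "real_cond_exp M F f \<in> borel_measurable (cl F)"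
      by (rule measurable_from_subalg[OF cl_basic(4)[OF F] borel_measurable_cond_exp])
  qed
qed


lemma tower_meet:
  assumes I: "I \<noteq> {}" and C: "\<forall>i\<in>I. subalgebra M (C i)" and i: "i \<in> I"
    and f: "integrable M f"
  shows "AE x in M. real_cond_exp M (meet_closure_sa M I C) (real_cond_exp M (C i) f) x
           = real_cond_exp M (meet_closure_sa M I C) f x"
proof -
  define K where "K = meet_closure_sa M I C"
  have KM: "subalgebra M K" unfolding K_def by (rule meet_basic(1)[OF I C])
  have Ci: "subalgebra M (C i)" using C i by blast
  interpret Ks: sigma_finite_subalgebra M K by (rule sfs_of_subalg[OF prob_space_axioms KM])
  interpret Cs: sigma_finite_subalgebra M "C i" by (rule sfs_of_subalg[OF prob_space_axioms Ci])
  interpret Ls: sigma_finite_subalgebra M "cl (C i)" by (rule sfs_of_subalg[OF prob_space_axioms cl_basic(3)[OF Ci]])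
  have clK: "subalgebra (cl (C i)) K"
    using meet_basic(2)[OF I C i] cl_basic(2)[OF Ci] KM unfolding K_def subalgebra_def by simp
  have "AE x in M. real_cond_exp M K (real_cond_exp M (C i) f) x = real_cond_exp M K (real_cond_exp M (cl (C i)) f) x"
    by (rule Ks.real_cond_exp_cong) (use ce_closure[OF Ci f] in \<open>auto elim: eventually_mono\<close>)
  moreover have "AE x in M. real_cond_exp M K (real_cond_exp M (cl (C i)) f) x = real_cond_exp M K f x"
    by (rule Ks.real_cond_exp_nested_subalg[OF cl_basic(3)[OF Ci] clK f])
  ultimately show ?thesis unfolding K_def[symmetric] by eventually_elim simp
qed

lemma inf_le1:
  assumes I: "I \<noteq> {}" and C: "\<forall>i\<in>I. subalgebra M (C i)" and i: "i \<in> I"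
  shows "idem_le M n (real_cond_exp M (meet_closure_sa M I C)) (real_cond_exp M (C i))"
proof -
  define K where "K = meet_closure_sa M I C"
  have KM: "subalgebra M K" unfolding K_def by (rule meet_basic(1)[OF I C])
  have Ci: "subalgebra M (C i)" using C i by blast
  interpret Ks: sigma_finite_subalgebra M K by (rule sfs_of_subalg[OF prob_space_axioms KM])
  have 1: "op_eq M n (real_cond_exp M K \<circ> real_cond_exp M (C i)) (real_cond_exp M K)"
    unfolding op_eq_def K_def using tower_meet[OF I C i] Lfun_int by simp
  have 2: "op_eq M n (real_cond_exp M (C i) \<circ> real_cond_exp M K) (real_cond_exp M K)"
    unfolding op_eq_def
  proof
    fix f assume f: "f \<in> Lfun M n"
    have ei: "integrable M (real_cond_exp M K f)" by (rule Ks.real_cond_exp_int(1)[OF Lfun_int[OF f]])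
    have "AE x in M. real_cond_exp M (cl (C i)) (real_cond_exp M K f) x = real_cond_exp M (C i) (real_cond_exp M K f) x"
      by (rule ce_closure[OF Ci ei])
    moreover have "AE x in M. real_cond_exp M (cl (C i)) (real_cond_exp M K f) x = real_cond_exp M K f x"
    proof -
      interpret Ls: sigma_finite_subalgebra M "cl (C i)" by (rule sfs_of_subalg[OF prob_space_axioms cl_basic(3)[OF Ci]])
      have clK: "subalgebra (cl (C i)) K"
        using meet_basic(2)[OF I C i] cl_basic(2)[OF Ci] KM unfolding K_def subalgebra_def by simp
      show ?thesis
        by (rule Ls.real_cond_exp_F_meas[OF ei measurable_from_subalg[OF clK borel_measurable_cond_exp]])
    qed
    ultimately show "AE x in M. (real_cond_exp M (C i) \<circ> real_cond_exp M K) f x = real_cond_exp M K f x"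
      by eventually_elim simp
  qed
  show ?thesis unfolding idem_le_def K_def[symmetric] using 1 2 by simp
qed

lemma ae_summable:
  fixes d :: "nat \<Rightarrow> 'a \<Rightarrow> real"
  assumes dm: "\<And>k. integrable M (d k)" and c: "\<And>k. (\<integral>x. \<bar>d k x\<bar> \<partial>M) \<le> c k" "summable c"
  shows "AE x in M. summable (\<lambda>k. \<bar>d k x\<bar>)"
proof -
  have c0: "0 \<le> c k" for k
  proof -
    have "0 \<le> (\<integral>x. \<bar>d k x\<bar> \<partial>M)" by (rule Bochner_Integration.integral_nonneg) simp
    then show ?thesis using c(1)[of k] by linarith
  qed
  have m: "\<And>k. (\<lambda>x. ennreal \<bar>d k x\<bar>) \<in> borel_measurable M" using dm by measurable
  have "(\<integral>\<^sup>+ x. (\<Sum>k. ennreal \<bar>d k x\<bar>) \<partial>M) = (\<Sum>k. \<integral>\<^sup>+ x. ennreal \<bar>d k x\<bar> \<partial>M)"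
    by (rule nn_integral_suminf[OF m])
  also have "\<dots> = (\<Sum>k. ennreal (\<integral>x. \<bar>d k x\<bar> \<partial>M))"
    by (intro suminf_cong nn_integral_eq_integral) (use dm in auto)
  also have "\<dots> \<le> (\<Sum>k. ennreal (c k))"
    by (intro suminf_le summableI ennreal_leI c(1))
  also have "\<dots> = ennreal (\<Sum>k. c k)" by (rule suminf_ennreal2[OF c0 c(2)])
  finally have "(\<integral>\<^sup>+ x. (\<Sum>k. ennreal \<bar>d k x\<bar>) \<partial>M) \<noteq> \<infinity>"
    by (metis ennreal_neq_top infinity_ennreal_def top.extremum_uniqueI)
  then have "AE x in M. (\<Sum>k. ennreal \<bar>d k x\<bar>) \<noteq> \<infinity>"
    by (intro nn_integral_PInf_AE) (use m in measurable)
  then show ?thesis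
    by eventually_elim (rule summable_suminf_not_top, simp_all)
qed

lemma Ni_sym: "Ni (\<lambda>x. f x - g x) = Ni (\<lambda>x. g x - f x)"
  unfolding Ni_def by (simp add: abs_minus_commute)

lemma Lfun_boundedE:
  fixes f :: "'a \<Rightarrow> real"
  assumes "f \<in> borel_measurable M" "AE x in M. \<bar>f x\<bar> \<le> K"
  shows "integrable M f"
  using Lfun_int[OF Lfun_bounded[OF assms]] .

lemma ce_bound:
  assumes F: "subalgebra M F" and g: "g \<in> borel_measurable M" "AE x in M. \<bar>g x\<bar> \<le> T"
  shows "AE x in M. \<bar>real_cond_exp M F g x\<bar> \<le> T"
proof -
  interpret Fs: sigma_finite_subalgebra M F by (rule sfs_of_subalg[OF prob_space_axioms F])
  have gi: "integrable M g" by (rule Lfun_boundedE[OF g])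
  have "AE x in M. real_cond_exp M F g x \<le> T"
    by (rule Fs.real_cond_exp_le_c[OF gi]) (use g(2) in \<open>auto elim: eventually_mono\<close>)
  moreover have "AE x in M. real_cond_exp M F g x \<ge> - T"
    by (rule Fs.real_cond_exp_ge_c[OF gi]) (use g(2) in \<open>auto elim: eventually_mono\<close>)
  ultimately show ?thesis by eventually_elim simp
qed


lemma am_gm_aux:
  fixes y c :: real assumes c: "0 < c"
  shows "\<bar>y\<bar> \<le> (c + y ^ 2 / c) / 2"
proof -
  have "0 \<le> (\<bar>y\<bar> - c) ^ 2" by simp
  then have "2 * c * \<bar>y\<bar> \<le> y ^ 2 + c ^ 2" by (simp add: power2_eq_square algebra_simps)
  then have "\<bar>y\<bar> \<le> (y ^ 2 + c ^ 2) / (2 * c)" using c by (simp add: field_simps)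
  also have "\<dots> = (c + y ^ 2 / c) / 2" using c by (simp add: field_simps power2_eq_square)
  finally show ?thesis .
qed

lemma abs_mult_le:
  fixes a b T :: real assumes "\<bar>a\<bar> \<le> T" "\<bar>b\<bar> \<le> T"
  shows "\<bar>a * b\<bar> \<le> T * T"
proof -
  have "\<bar>a\<bar> * \<bar>b\<bar> \<le> T * T" by (rule mult_mono) (use assms in auto)
  then show ?thesis by (simp add: abs_mult)
qed

lemma Ni_neg: "Ni (\<lambda>x. - f x) = Ni f"
  unfolding Ni_def by simp

lemma R3:
  assumes n2: "n = 2" and I: "directed_set I le" and C: "\<forall>i\<in>I. subalgebra M (C i)"
    and dec: "\<forall>i\<in>I. \<forall>j\<in>I. le i j \<longrightarrow> sets (C j) \<subseteq> sets (C i)"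
    and gm: "g \<in> borel_measurable M" and gb: "AE x in M. \<bar>g x\<bar> \<le> T"
    and g0: "AE x in M. real_cond_exp M (meet_closure_sa M I C) g x = 0"
    and e: "e > 0"
  shows "\<exists>i\<in>I. Ni (real_cond_exp M (C i) g) \<le> e"
proof -
  define K where "K = meet_closure_sa M I C"
  have Ine: "I \<noteq> {}" using I by (simp add: directed_set_def)
  have KM: "subalgebra M K" unfolding K_def by (rule meet_basic(1)[OF Ine C])
  interpret Ks: sigma_finite_subalgebra M K by (rule sfs_of_subalg[OF prob_space_axioms KM])
  have Ci: "subalgebra M (C i)" if "i \<in> I" for i using C that by blast
  have gi: "integrable M g" by (rule Lfun_boundedE[OF gm gb])
  define h where "h i = real_cond_exp M (C i) g" for i
  define a where "a i = Ni (h i)" for i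
  have hM: "h i \<in> borel_measurable M" for i unfolding h_def by simp
  have hb: "AE x in M. \<bar>h i x\<bar> \<le> T" if "i \<in> I" for i
    unfolding h_def by (rule ce_bound[OF Ci[OF that] gm gb])
  have hL: "h i \<in> Lfun M n" if "i \<in> I" for i by (rule Lfun_bounded[OF hM hb[OF that]])
  have hi: "integrable M (h i)" if "i \<in> I" for i by (rule Lfun_int[OF hL[OF that]])
  have a0: "0 \<le> a i" for i unfolding a_def by (rule Ni_nonneg)
  have sq: "Ni f = (\<integral>x. (f x) ^ 2 \<partial>M)" for f unfolding Ni_def using n2 by simp
  have bint: "integrable M f" if "f \<in> borel_measurable M" "AE x in M. \<bar>f x\<bar> \<le> B" for f :: "'a \<Rightarrow> real" and B
    by (rule Lfun_boundedE[OF that])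
  have orth: "Ni (\<lambda>x. h i x - h j x) = a i - a j" if ij: "i \<in> I" "j \<in> I" "le i j" for i j
  proof -
    interpret Cj: sigma_finite_subalgebra M "C j" by (rule sfs_of_subalg[OF prob_space_axioms Ci[OF ij(2)]])
    have sub: "subalgebra (C i) (C j)" using dec ij Ci[OF ij(1)] Ci[OF ij(2)] by (simp add: subalgebra_def)
    have nest: "AE x in M. real_cond_exp M (C j) (h i) x = h j x"
      unfolding h_def by (rule Cj.real_cond_exp_nested_subalg[OF Ci[OF ij(1)] sub gi])
    have pq: "AE x in M. \<bar>h j x * h i x\<bar> \<le> T * T"
      using hb[OF ij(1)] hb[OF ij(2)] by eventually_elim (rule abs_mult_le)
    have ipq: "integrable M (\<lambda>x. h j x * h i x)" by (rule bint[OF _ pq]) (use hM in simp)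
    have sqb: "AE x in M. \<bar>(h k x) ^ 2\<bar> \<le> T * T" if "k \<in> I" for k
      using hb[OF that] by eventually_elim (simp only: power2_eq_square abs_mult_le)
    have ip2: "integrable M (\<lambda>x. (h i x) ^ 2)" by (rule bint[OF _ sqb[OF ij(1)]]) (use hM in simp)
    have iq2: "integrable M (\<lambda>x. (h j x) ^ 2)" by (rule bint[OF _ sqb[OF ij(2)]]) (use hM in simp)
    have hjC: "h j \<in> borel_measurable (C j)" unfolding h_def by simp
    have "(\<integral>x. h j x * h i x \<partial>M) = (\<integral>x. h j x * real_cond_exp M (C j) (h i) x \<partial>M)"
      by (rule Cj.real_cond_exp_intg(2)[OF ipq hjC hM, symmetric])
    also have "\<dots> = (\<integral>x. (h j x) ^ 2 \<partial>M)"
      by (rule integral_cong_AE) (use hM nest in \<open>auto simp: power2_eq_square elim: eventually_mono\<close>)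
    finally have cross: "(\<integral>x. h j x * h i x \<partial>M) = (\<integral>x. (h j x) ^ 2 \<partial>M)" .
    have "Ni (\<lambda>x. h i x - h j x) = (\<integral>x. (h i x) ^ 2 + (h j x) ^ 2 - 2 * (h j x * h i x) \<partial>M)"
      unfolding sq by (rule Bochner_Integration.integral_cong) (simp_all add: power2_diff algebra_simps)
    also have "\<dots> = (\<integral>x. (h i x) ^ 2 \<partial>M) + (\<integral>x. (h j x) ^ 2 \<partial>M) - 2 * (\<integral>x. h j x * h i x \<partial>M)"
      using ip2 iq2 ipq by simp
    also have "\<dots> = a i - a j" unfolding a_def sq cross by simp
    finally show ?thesis .
  qed
  have amono: "a j \<le> a i" if "i \<in> I" "j \<in> I" "le i j" for i j
    using orth[OF that] Ni_nonneg[of "\<lambda>x. h i x - h j x"] by simp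
  define L where "L = Inf (a ` I)"
  have bdd: "bdd_below (a ` I)" using a0 by (intro bdd_belowI[where m=0]) auto
  have Lle: "L \<le> a i" if "i \<in> I" for i unfolding L_def using that bdd by (intro cInf_lower) auto
  have Lex: "\<exists>i\<in>I. a i < L + \<epsilon>" if "\<epsilon> > 0" for \<epsilon>
  proof -
    have "Inf (a ` I) < L + \<epsilon>" using that unfolding L_def by simp
    then show ?thesis using cInf_less_iff[of "a ` I"] Ine bdd by auto
  qed
  define i0 where "i0 = (SOME i. i \<in> I \<and> a i < L + 1)"
  define nxt where "nxt k p = (SOME j. j \<in> I \<and> le p j \<and> a j < L + (1/4) ^ Suc k)" for k p
  define lam where "lam = rec_nat i0 nxt"
  have lam0: "lam 0 = i0" and lamS: "lam (Suc k) = nxt k (lam k)" for k by (simp_all add: lam_def)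
  have i0: "i0 \<in> I \<and> a i0 < L + 1"
    unfolding i0_def by (rule someI_ex) (use Lex[of 1] in auto)
  have nxt: "nxt k p \<in> I \<and> le p (nxt k p) \<and> a (nxt k p) < L + (1/4) ^ Suc k" if p: "p \<in> I" for k p
  proof -
    obtain \<mu> where \<mu>: "\<mu> \<in> I" "a \<mu> < L + (1/4) ^ Suc k" using Lex[of "(1/4) ^ Suc k"] by auto
    obtain \<nu> where \<nu>: "\<nu> \<in> I" "le p \<nu>" "le \<mu> \<nu>" using I p \<mu>(1) unfolding directed_set_def by blast
    have "a \<nu> < L + (1/4) ^ Suc k" using amono[OF \<mu>(1) \<nu>(1,3)] \<mu>(2) by linarith
    then have "\<exists>j. j \<in> I \<and> le p j \<and> a j < L + (1/4) ^ Suc k" using \<nu> by blast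
    then show ?thesis unfolding nxt_def by (rule someI_ex)
  qed
  have lamP: "lam k \<in> I \<and> a (lam k) < L + (1/4) ^ k" for k
  proof (induct k)
    case 0 then show ?case using i0 lam0 by simp
  next
    case (Suc k) then show ?case using nxt[of "lam k" k] lamS[of k] by simp
  qed
  have lamI: "lam k \<in> I" for k using lamP by blast
  have lamle: "le (lam k) (lam (Suc k))" for k using nxt[OF lamI[of k], of k] lamS[of k] by simp
  define hk where "hk k = h (lam k)" for k
  define d where "d k x = hk k x - hk (Suc k) x" for k x
  have hkb: "AE x in M. \<bar>hk k x\<bar> \<le> T" for k unfolding hk_def by (rule hb[OF lamI])
  have hkL: "hk k \<in> Lfun M n" for k unfolding hk_def by (rule hL[OF lamI])
  have step: "Ni (d k) < (1/4) ^ k" for k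
  proof -
    have "Ni (d k) = a (lam k) - a (lam (Suc k))"
      unfolding d_def hk_def by (rule orth[OF lamI lamI lamle])
    also have "\<dots> \<le> a (lam k) - L" using Lle[OF lamI[of "Suc k"]] by simp
    also have "\<dots> < (1/4) ^ k" using lamP[of k] by simp
    finally show ?thesis .
  qed
  have dL: "d k \<in> Lfun M n" for k unfolding d_def by (rule Lfun_diff[OF hkL hkL])
  have dabs: "(\<integral>x. \<bar>d k x\<bar> \<partial>M) \<le> (1/2) ^ k" for k
  proof -
    define c :: real where "c = (1/2) ^ k"
    have c: "0 < c" unfolding c_def by simp
    have "(\<integral>x. \<bar>d k x\<bar> \<partial>M) \<le> (\<integral>x. (c + (d k x) ^ 2 / c) / 2 \<partial>M)"
    proof (rule integral_mono)
      show "integrable M (\<lambda>x. \<bar>d k x\<bar>)" using Lfun_int[OF dL[of k]] by simp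
      have "integrable M (\<lambda>x. (d k x) ^ 2)" using Lfun_Ni_int[OF dL[of k]] n2 by simp
      then show "integrable M (\<lambda>x. (c + (d k x) ^ 2 / c) / 2)" by simp
      show "\<bar>d k x\<bar> \<le> (c + (d k x) ^ 2 / c) / 2" for x by (rule am_gm_aux[OF c])
    qed
    also have "\<dots> = (c + Ni (d k) / c) / 2"
    proof -
      have i2: "integrable M (\<lambda>x. (d k x) ^ 2)" using Lfun_Ni_int[OF dL[of k]] n2 by simp
      have "(\<integral>x. (c + (d k x) ^ 2 / c) / 2 \<partial>M) = (\<integral>x. c / 2 + (d k x) ^ 2 / (2 * c) \<partial>M)"
        by (rule Bochner_Integration.integral_cong) (simp_all add: field_simps)
      also have "\<dots> = c / 2 + (\<integral>x. (d k x) ^ 2 \<partial>M) / (2 * c)"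
        using i2 by (simp add: prob_space)
      also have "\<dots> = (c + Ni (d k) / c) / 2" unfolding sq using c by (simp add: field_simps)
      finally show ?thesis .
    qed
    also have "\<dots> \<le> (c + c ^ 2 / c) / 2"
    proof -
      have "Ni (d k) \<le> c ^ 2" using step[of k] unfolding c_def by (simp add: power_mult_distrib[symmetric] power_mult[symmetric] power2_eq_square power_mult_distrib)
      then show ?thesis using c by (simp add: divide_right_mono)
    qed
    also have "\<dots> = c" using c by (simp add: power2_eq_square)
    finally show ?thesis unfolding c_def .
  qed
  have dsum: "AE x in M. summable (\<lambda>k. \<bar>d k x\<bar>)"
    by (rule ae_summable[OF _ dabs]) (use Lfun_int[OF dL] in \<open>simp_all add: summable_geometric\<close>)
  have conv: "AE x in M. convergent (\<lambda>k. hk k x)"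
    using dsum
  proof eventually_elim
    case (elim x)
    have "summable (\<lambda>k. norm (d k x))" using elim by (simp only: real_norm_def)
    then have s: "summable (\<lambda>k. d k x)" by (rule summable_norm_cancel)
    have tel: "(\<Sum>k<m. d k x) = hk 0 x - hk m x" for m
      unfolding d_def by (rule sum_lessThan_telescope')
    have "(\<lambda>m. \<Sum>k<m. d k x) \<longlonglongrightarrow> (\<Sum>k. d k x)" by (rule summable_LIMSEQ[OF s])
    then have "(\<lambda>m. hk 0 x - hk m x) \<longlonglongrightarrow> (\<Sum>k. d k x)" by (simp only: tel)
    then have "(\<lambda>m. hk 0 x - (hk 0 x - hk m x)) \<longlonglongrightarrow> hk 0 x - (\<Sum>k. d k x)"
      by (intro tendsto_diff tendsto_const)
    then have "(\<lambda>m. hk m x) \<longlonglongrightarrow> hk 0 x - (\<Sum>k. d k x)" by simp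
    then show ?case unfolding convergent_def by blast
  qed
  have hkM: "hk k \<in> borel_measurable M" for k unfolding hk_def by (rule hM)
  define H where "H x = lim (\<lambda>k. hk k x)" for x
  have HM: "H \<in> borel_measurable M" unfolding H_def using hkM by measurable
  have Hlim: "AE x in M. (\<lambda>k. hk k x) \<longlonglongrightarrow> H x"
    using conv by eventually_elim (simp add: H_def convergent_LIMSEQ_iff)
  have hkb_all: "AE x in M. \<forall>k. \<bar>hk k x\<bar> \<le> T" using hkb by (simp add: AE_all_countable)
  have Hb: "AE x in M. \<bar>H x\<bar> \<le> T"
    using Hlim hkb_all
  proof eventually_elim
    case (elim x)
    have "(\<lambda>k. \<bar>hk k x\<bar>) \<longlonglongrightarrow> \<bar>H x\<bar>" using elim(1) by (rule tendsto_rabs)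
    then show ?case by (rule LIMSEQ_le_const2) (use elim(2) in blast)
  qed
  have HL: "H \<in> Lfun M n" by (rule Lfun_bounded[OF HM Hb])
  have Hi: "integrable M H" by (rule Lfun_int[OF HL])
  have lim1: "(\<lambda>k. Ni (\<lambda>x. hk k x - H x)) \<longlonglongrightarrow> 0"
  proof -
    have "(\<lambda>k. Ni (\<lambda>x. hk k x - H x)) \<longlonglongrightarrow> (\<integral>x. 0 \<partial>M)"
      unfolding Ni_def
    proof (rule integral_dominated_convergence[where w="\<lambda>x. (2 * T) ^ n"])
      show "(\<lambda>x. 0::real) \<in> borel_measurable M" by simp
      show "(\<lambda>x. \<bar>hk k x - H x\<bar> ^ n) \<in> borel_measurable M" for k using hkM[of k] HM by measurable
      show "integrable M (\<lambda>x. (2 * T) ^ n)" by simp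
      show "AE x in M. (\<lambda>k. \<bar>hk k x - H x\<bar> ^ n) \<longlonglongrightarrow> 0"
        using Hlim
      proof eventually_elim
        case (elim x)
        have "(\<lambda>k. hk k x - H x) \<longlonglongrightarrow> H x - H x" using elim by (intro tendsto_diff tendsto_const)
        then have lim: "(\<lambda>k. \<bar>hk k x - H x\<bar> ^ n) \<longlonglongrightarrow> \<bar>H x - H x\<bar> ^ n" by (intro tendsto_power tendsto_rabs)
        have z: "\<bar>H x - H x\<bar> ^ n = (0::real)" using n1 by simp
        show ?case using lim by (simp only: z)
      qed
      show "AE x in M. norm (\<bar>hk k x - H x\<bar> ^ n) \<le> (2 * T) ^ n" for k
        using hkb[of k] Hb
      proof eventually_elim
        case (elim x)
        have "\<bar>hk k x - H x\<bar> \<le> 2 * T" using elim by linarith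
        then have "\<bar>hk k x - H x\<bar> ^ n \<le> (2 * T) ^ n" by (intro power_mono) simp_all
        then show ?case by simp
      qed
    qed
    then show ?thesis by simp
  qed
  have q4: "(\<lambda>k. (1/4::real) ^ k) \<longlonglongrightarrow> 0" by (rule LIMSEQ_power_zero) simp
  have four: "(2::real) ^ n = 4" using n2 by simp
  \<comment> \<open>H is measurable w.r.t. every closure\<close>
  have HC: "AE x in M. H x = real_cond_exp M (C i) H x" if i: "i \<in> I" for i
  proof -
    interpret Cs: sigma_finite_subalgebra M "C i" by (rule sfs_of_subalg[OF prob_space_axioms Ci[OF i]])
    define Q where "Q = Ni (\<lambda>x. H x - real_cond_exp M (C i) H x)"
    have EHL: "real_cond_exp M (C i) H \<in> Lfun M n" by (rule ce_Lfun(1)[OF Ci[OF i] HL])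
    have Qb: "Q \<le> 32 * (Ni (\<lambda>x. hk k x - H x) + (1/4) ^ k)" for k
    proof -
      obtain \<mu> where \<mu>: "\<mu> \<in> I" "le (lam k) \<mu>" "le i \<mu>" using I lamI[of k] i unfolding directed_set_def by blast
      define p where "p = h \<mu>"
      have pL: "p \<in> Lfun M n" unfolding p_def by (rule hL[OF \<mu>(1)])
      have subi: "subalgebra (C i) (C \<mu>)" using dec \<mu> i Ci[OF i] Ci[OF \<mu>(1)] by (simp add: subalgebra_def)
      have pC: "p \<in> borel_measurable (C i)" unfolding p_def h_def
        by (rule measurable_from_subalg[OF subi borel_measurable_cond_exp])
      have Ep: "AE x in M. real_cond_exp M (C i) p x = p x"
        by (rule Cs.real_cond_exp_F_meas[OF Lfun_int[OF pL] pC])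
      have HpL: "(\<lambda>x. H x - p x) \<in> Lfun M n" by (rule Lfun_diff[OF HL pL])
      have Ed: "AE x in M. real_cond_exp M (C i) (\<lambda>x. H x - p x) x = real_cond_exp M (C i) H x - real_cond_exp M (C i) p x"
        by (rule Cs.real_cond_exp_diff[OF Hi Lfun_int[OF pL]])
      have ae: "AE x in M. H x - real_cond_exp M (C i) H x = (H x - p x) + (-1) * real_cond_exp M (C i) (\<lambda>x. H x - p x) x"
        using Ed Ep by eventually_elim simp
      have EdL: "real_cond_exp M (C i) (\<lambda>x. H x - p x) \<in> Lfun M n" by (rule ce_Lfun(1)[OF Ci[OF i] HpL])
      have sL: "(\<lambda>x. (-1) * real_cond_exp M (C i) (\<lambda>x. H x - p x) x) \<in> Lfun M n" by (rule Lfun_scale[OF EdL])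
      have m1: "(\<lambda>x. H x - real_cond_exp M (C i) H x) \<in> borel_measurable M"
        by (rule Lfun_meas[OF Lfun_diff[OF HL EHL]])
      have m2: "(\<lambda>x. (H x - p x) + (-1) * real_cond_exp M (C i) (\<lambda>x. H x - p x) x) \<in> borel_measurable M"
        by (rule Lfun_meas[OF Lfun_add[OF HpL sL]])
      have "Q = Ni (\<lambda>x. (H x - p x) + (-1) * real_cond_exp M (C i) (\<lambda>x. H x - p x) x)"
        unfolding Q_def by (rule Ni_cong[OF m1 m2 ae])
      also have "\<dots> \<le> 2 ^ n * (Ni (\<lambda>x. H x - p x) + Ni (\<lambda>x. (-1) * real_cond_exp M (C i) (\<lambda>x. H x - p x) x))"
        by (rule Ni_tri[OF HpL sL])
      also have "\<dots> \<le> 4 * (Ni (\<lambda>x. H x - p x) + Ni (\<lambda>x. H x - p x))"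
        unfolding four Ni_scale using ce_Lfun(2)[OF Ci[OF i] HpL] by simp
      also have "\<dots> = 8 * Ni (\<lambda>x. H x - p x)" by simp
      also have "\<dots> \<le> 8 * (4 * (Ni (\<lambda>x. H x - hk k x) + Ni (\<lambda>x. hk k x - p x)))"
        using Ni_tri3[OF HL pL hkL[of k]] unfolding four by simp
      also have "\<dots> \<le> 32 * (Ni (\<lambda>x. hk k x - H x) + (1/4) ^ k)"
      proof -
        have "Ni (\<lambda>x. hk k x - p x) = a (lam k) - a \<mu>"
          unfolding hk_def p_def by (rule orth[OF lamI \<mu>(1,2)])
        also have "\<dots> \<le> a (lam k) - L" using Lle[OF \<mu>(1)] by simp
        also have "\<dots> < (1/4) ^ k" using lamP[of k] by simp
        finally show ?thesis using Ni_sym[of H "hk k"] by simp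
      qed
      finally show ?thesis .
    qed
    have "(\<lambda>k. 32 * (Ni (\<lambda>x. hk k x - H x) + (1/4) ^ k)) \<longlonglongrightarrow> 32 * (0 + 0)"
      by (intro tendsto_mult tendsto_add tendsto_const lim1 q4)
    then have l0: "(\<lambda>k. 32 * (Ni (\<lambda>x. hk k x - H x) + (1/4) ^ k)) \<longlonglongrightarrow> 0" by simp
    have "Q \<le> 0" by (rule LIMSEQ_le_const[OF l0]) (use Qb in blast)
    then have "AE x in M. H x - real_cond_exp M (C i) H x = 0"
      unfolding Q_def by (rule Ni_zero[OF Lfun_diff[OF HL EHL]])
    then show ?thesis by eventually_elim simp
  qed
  have HK: "H \<in> borel_measurable K" unfolding K_def
    by (rule meas_meet[OF Ine C]) (rule meas_closure[OF Ci HM borel_measurable_cond_exp HC])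
  have EKH: "AE x in M. real_cond_exp M K H x = H x" by (rule Ks.real_cond_exp_F_meas[OF Hi HK])
  have Hbound: "Ni H \<le> Ni (\<lambda>x. hk k x - H x)" for k
  proof -
    have hki: "integrable M (hk k)" by (rule Lfun_int[OF hkL])
    have z: "AE x in M. real_cond_exp M K (hk k) x = 0"
      using tower_meet[OF Ine C lamI gi, of k] g0 unfolding K_def[symmetric] hk_def h_def
      by eventually_elim simp
    have Ed: "AE x in M. real_cond_exp M K (\<lambda>x. H x - hk k x) x = real_cond_exp M K H x - real_cond_exp M K (hk k) x"
      by (rule Ks.real_cond_exp_diff[OF Hi hki])
    have ae: "AE x in M. H x = real_cond_exp M K (\<lambda>x. H x - hk k x) x"
      using Ed z EKH by eventually_elim simp
    have dL: "(\<lambda>x. H x - hk k x) \<in> Lfun M n" by (rule Lfun_diff[OF HL hkL])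
    have "Ni H = Ni (real_cond_exp M K (\<lambda>x. H x - hk k x))"
      by (rule Ni_cong[OF HM _ ae]) simp
    also have "\<dots> \<le> Ni (\<lambda>x. H x - hk k x)" by (rule ce_Lfun(2)[OF KM dL])
    finally show ?thesis using Ni_sym[of H "hk k"] by simp
  qed
  have "Ni H \<le> 0" by (rule LIMSEQ_le_const[OF lim1]) (use Hbound in blast)
  then have NH: "Ni H = 0" using Ni_nonneg[of H] by simp
  have abound: "a (lam k) \<le> 4 * Ni (\<lambda>x. hk k x - H x)" for k
  proof -
    have "a (lam k) = Ni (\<lambda>x. (hk k x - H x) + H x)" unfolding a_def hk_def by simp
    also have "\<dots> \<le> 2 ^ n * (Ni (\<lambda>x. hk k x - H x) + Ni H)"
      by (rule Ni_tri[OF Lfun_diff[OF hkL HL] HL])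
    finally show ?thesis unfolding four NH by simp
  qed
  have "(\<lambda>k. 4 * Ni (\<lambda>x. hk k x - H x)) \<longlonglongrightarrow> 4 * 0" by (intro tendsto_mult tendsto_const lim1)
  then obtain k where "norm (4 * Ni (\<lambda>x. hk k x - H x) - 4 * 0) < e" using LIMSEQ_D[OF _ e] by blast
  then have "a (lam k) \<le> e" using abound[of k] by simp
  then show ?thesis using lamI[of k] unfolding a_def h_def by blast
qed



lemma pow_split_bound:
  fixes y T \<delta> :: real
  assumes y: "\<bar>y\<bar> \<le> T" and d: "0 < \<delta>"
  shows "\<bar>y\<bar> ^ m \<le> \<delta> ^ m + T ^ m * (y ^ 2 / \<delta> ^ 2)"
proof (cases "\<bar>y\<bar> \<le> \<delta>")
  case True
  have T0: "0 \<le> T" using y by linarith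
  have "\<bar>y\<bar> ^ m \<le> \<delta> ^ m" using True by (intro power_mono) simp_all
  moreover have "0 \<le> T ^ m * (y ^ 2 / \<delta> ^ 2)" using T0 by simp
  ultimately show ?thesis by linarith
next
  case False
  have T0: "0 \<le> T" using y by linarith
  have "\<bar>y\<bar> ^ m \<le> T ^ m" using y by (intro power_mono) simp_all
  moreover have "1 \<le> y ^ 2 / \<delta> ^ 2"
  proof -
    have "\<delta> ^ 2 \<le> \<bar>y\<bar> ^ 2" using False d by (intro power_mono) simp_all
    then show ?thesis using d by simp
  qed
  then have "T ^ m * 1 \<le> T ^ m * (y ^ 2 / \<delta> ^ 2)" using T0 by (intro mult_left_mono) simp_all
  moreover have "0 \<le> \<delta> ^ m" using d by simp
  ultimately show ?thesis by linarith
qed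

lemma R2:
  assumes I: "directed_set I le" and C: "\<forall>i\<in>I. subalgebra M (C i)"
    and dec: "\<forall>i\<in>I. \<forall>j\<in>I. le i j \<longrightarrow> sets (C j) \<subseteq> sets (C i)"
    and gm: "g \<in> borel_measurable M" and gb: "AE x in M. \<bar>g x\<bar> \<le> T"
    and g0: "AE x in M. real_cond_exp M (meet_closure_sa M I C) g x = 0"
    and e: "e > 0"
  shows "\<exists>i\<in>I. Ni (real_cond_exp M (C i) g) \<le> e"
proof -
  interpret L2: LS M 2 by unfold_locales simp
  have "AE x in M. 0 \<le> T" using gb by eventually_elim (rule order_trans[OF abs_ge_zero])
  then have T0: "0 \<le> T" by simp
  define \<delta> :: real where "\<delta> = min 1 (e / 2)"
  have d0: "0 < \<delta>" unfolding \<delta>_def using e by simp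
  have dn: "\<delta> ^ n \<le> e / 2"
  proof -
    have "\<delta> ^ n \<le> \<delta> ^ 1" using d0 n1 by (intro power_decreasing) (simp_all add: \<delta>_def)
    then show ?thesis unfolding \<delta>_def by simp
  qed
  define \<epsilon> where "\<epsilon> = (e / 2) * \<delta> ^ 2 / (T ^ n + 1)"
  have eps: "\<epsilon> > 0" unfolding \<epsilon>_def using e d0 T0 by (simp add: add_nonneg_pos)
  obtain i where i: "i \<in> I" "L2.Ni (real_cond_exp M (C i) g) \<le> \<epsilon>"
    using L2.R3[OF refl I C dec gm gb g0 eps] by blast
  have Ci: "subalgebra M (C i)" using C i by blast
  define E where "E = real_cond_exp M (C i) g"
  have Eb: "AE x in M. \<bar>E x\<bar> \<le> T" unfolding E_def by (rule ce_bound[OF Ci gm gb])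
  have EM: "E \<in> borel_measurable M" unfolding E_def by simp
  have E2: "integrable M (\<lambda>x. (E x) ^ 2)"
    using L2.Lfun_Ni_int[OF L2.Lfun_bounded[OF EM Eb]] by simp
  have "Ni E \<le> (\<integral>x. \<delta> ^ n + T ^ n * ((E x) ^ 2 / \<delta> ^ 2) \<partial>M)"
    unfolding Ni_def
  proof (rule integral_mono_AE)
    show "integrable M (\<lambda>x. \<bar>E x\<bar> ^ n)" by (rule Lfun_Ni_int[OF Lfun_bounded[OF EM Eb]])
    show "integrable M (\<lambda>x. \<delta> ^ n + T ^ n * ((E x) ^ 2 / \<delta> ^ 2))" using E2 by simp
    show "AE x in M. \<bar>E x\<bar> ^ n \<le> \<delta> ^ n + T ^ n * ((E x) ^ 2 / \<delta> ^ 2)"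
      using Eb by eventually_elim (rule pow_split_bound[OF _ d0])
  qed
  also have "\<dots> = \<delta> ^ n + T ^ n / \<delta> ^ 2 * (\<integral>x. (E x) ^ 2 \<partial>M)"
    using E2 by (simp add: prob_space)
  also have "(\<integral>x. (E x) ^ 2 \<partial>M) = L2.Ni E" unfolding L2.Ni_def by simp
  also have "T ^ n / \<delta> ^ 2 * L2.Ni E \<le> T ^ n / \<delta> ^ 2 * \<epsilon>"
    using i(2) T0 d0 unfolding E_def by (intro mult_left_mono) simp_all
  also have "T ^ n / \<delta> ^ 2 * \<epsilon> = (e / 2) * (T ^ n / (T ^ n + 1))"
    unfolding \<epsilon>_def using d0 by (simp add: field_simps)
  also have "\<dots> \<le> (e / 2) * 1"
  proof -
    have "0 \<le> T ^ n" using T0 by simp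
    then have "T ^ n / (T ^ n + 1) \<le> 1" by (simp add: divide_le_eq_1)
    then show ?thesis using e by (intro mult_left_mono) simp_all
  qed
  finally have "Ni E \<le> \<delta> ^ n + e / 2" by simp
  then show ?thesis using dn i(1) unfolding E_def by (intro bexI[of _ i]) simp_all
qed


lemma trunc_le: fixes y :: real assumes "0 \<le> r" shows "\<bar>y - max (- r) (min r y)\<bar> \<le> \<bar>y\<bar>"
  using assms by (cases "y \<le> r"; cases "y \<ge> - r") (simp_all add: max_def min_def)

lemma trunc_bd: fixes y :: real assumes "0 \<le> r" shows "\<bar>max (- r) (min r y)\<bar> \<le> r"
  using assms by (simp add: max_def min_def abs_le_iff)

lemma trunc_eq: fixes y :: real shows "\<bar>y\<bar> \<le> r \<Longrightarrow> max (- r) (min r y) = y"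
  by (simp add: max_def min_def abs_le_iff)

lemma R1:
  assumes I: "directed_set I le" and C: "\<forall>i\<in>I. subalgebra M (C i)"
    and dec: "\<forall>i\<in>I. \<forall>j\<in>I. le i j \<longrightarrow> sets (C j) \<subseteq> sets (C i)"
    and gL: "g \<in> Lfun M n"
    and g0: "AE x in M. real_cond_exp M (meet_closure_sa M I C) g x = 0"
    and e: "e > 0"
  shows "\<exists>i\<in>I. Ni (real_cond_exp M (C i) g) \<le> e"
proof -
  define K where "K = meet_closure_sa M I C"
  have Ine: "I \<noteq> {}" using I by (simp add: directed_set_def)
  have KM: "subalgebra M K" unfolding K_def by (rule meet_basic(1)[OF Ine C])
  interpret Ks: sigma_finite_subalgebra M K by (rule sfs_of_subalg[OF prob_space_axioms KM])
  have gM: "g \<in> borel_measurable M" by (rule Lfun_meas[OF gL])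
  have gi: "integrable M g" by (rule Lfun_int[OF gL])
  define t where "t m x = max (- real m) (min (real m) (g x))" for m x
  have tM: "t m \<in> borel_measurable M" for m unfolding t_def using gM by measurable
  have tb: "\<bar>t m x\<bar> \<le> real m" for m x unfolding t_def by (rule trunc_bd) simp
  have tL: "t m \<in> Lfun M n" for m by (rule Lfun_bounded[OF tM]) (use tb in \<open>rule AE_I2\<close>)
  have lim: "(\<lambda>m. Ni (\<lambda>x. g x - t m x)) \<longlonglongrightarrow> 0"
  proof -
    have "(\<lambda>m. Ni (\<lambda>x. g x - t m x)) \<longlonglongrightarrow> (\<integral>x. 0 \<partial>M)"
      unfolding Ni_def
    proof (rule integral_dominated_convergence[where w="\<lambda>x. \<bar>g x\<bar> ^ n"])
      show "(\<lambda>x. 0::real) \<in> borel_measurable M" by simp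
      show "(\<lambda>x. \<bar>g x - t m x\<bar> ^ n) \<in> borel_measurable M" for m using gM tM[of m] by measurable
      show "integrable M (\<lambda>x. \<bar>g x\<bar> ^ n)" by (rule Lfun_Ni_int[OF gL])
      show "AE x in M. (\<lambda>m. \<bar>g x - t m x\<bar> ^ n) \<longlonglongrightarrow> 0"
      proof (rule AE_I2)
        fix x
        obtain N :: nat where N: "\<bar>g x\<bar> \<le> real N" using real_arch_simple by blast
        have "\<forall>m\<ge>N. \<bar>g x - t m x\<bar> ^ n = 0"
        proof (intro allI impI)
          fix m assume "N \<le> m"
          then have "\<bar>g x\<bar> \<le> real m" using N by (meson of_nat_le_iff order_trans)
          then have "t m x = g x" unfolding t_def by (rule trunc_eq)
          then show "\<bar>g x - t m x\<bar> ^ n = 0" using n1 by simp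
        qed
        then have "eventually (\<lambda>m. \<bar>g x - t m x\<bar> ^ n = 0) sequentially"
          unfolding eventually_sequentially by blast
        then show "(\<lambda>m. \<bar>g x - t m x\<bar> ^ n) \<longlonglongrightarrow> 0" by (rule tendsto_eventually)
      qed
      show "AE x in M. norm (\<bar>g x - t m x\<bar> ^ n) \<le> \<bar>g x\<bar> ^ n" for m
      proof (rule AE_I2)
        fix x
        have "\<bar>g x - t m x\<bar> \<le> \<bar>g x\<bar>" unfolding t_def by (rule trunc_le) simp
        then have "\<bar>g x - t m x\<bar> ^ n \<le> \<bar>g x\<bar> ^ n" by (intro power_mono) simp_all
        then show "norm (\<bar>g x - t m x\<bar> ^ n) \<le> \<bar>g x\<bar> ^ n" by simp
      qed
    qed
    then show ?thesis by simp
  qed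
  define c :: real where "c = 2 ^ n * 2 ^ (n + 1)"
  have c0: "c > 0" unfolding c_def by simp
  obtain m where m: "norm (Ni (\<lambda>x. g x - t m x) - 0) < e / 2 / c"
    using LIMSEQ_D[OF lim, of "e / 2 / c"] e c0 by auto
  have mb: "c * Ni (\<lambda>x. g x - t m x) \<le> e / 2"
  proof -
    have "Ni (\<lambda>x. g x - t m x) \<le> e / 2 / c" using m by simp
    then show ?thesis using c0 by (simp add: field_simps)
  qed
  define tt where "tt = t m"
  have ttL: "tt \<in> Lfun M n" unfolding tt_def by (rule tL)
  have tti: "integrable M tt" by (rule Lfun_int[OF ttL])
  define g' where "g' x = tt x - real_cond_exp M K tt x" for x
  have EKtL: "real_cond_exp M K tt \<in> Lfun M n" by (rule ce_Lfun(1)[OF KM ttL])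
  have g'L: "g' \<in> Lfun M n" unfolding g'_def by (rule Lfun_diff[OF ttL EKtL])
  have g'M: "g' \<in> borel_measurable M" by (rule Lfun_meas[OF g'L])
  have EKtb: "AE x in M. \<bar>real_cond_exp M K tt x\<bar> \<le> real m"
    unfolding tt_def by (rule ce_bound[OF KM tM]) (use tb in \<open>rule AE_I2\<close>)
  have g'b: "AE x in M. \<bar>g' x\<bar> \<le> 2 * real m"
    using EKtb
  proof eventually_elim
    case (elim x)
    have "\<bar>tt x\<bar> \<le> real m" unfolding tt_def by (rule tb)
    then show ?case unfolding g'_def using elim by linarith
  qed
  have g'0: "AE x in M. real_cond_exp M K g' x = 0"
  proof -
    have "AE x in M. real_cond_exp M K g' x = real_cond_exp M K tt x - real_cond_exp M K (real_cond_exp M K tt) x"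
      unfolding g'_def by (rule Ks.real_cond_exp_diff[OF tti Ks.real_cond_exp_int(1)[OF tti]])
    moreover have "AE x in M. real_cond_exp M K (real_cond_exp M K tt) x = real_cond_exp M K tt x"
      by (rule Ks.real_cond_exp_F_meas[OF Ks.real_cond_exp_int(1)[OF tti]]) simp
    ultimately show ?thesis by eventually_elim simp
  qed
  have e2: "e / 2 / 2 ^ n > 0" using e by simp
  obtain i where i: "i \<in> I" "Ni (real_cond_exp M (C i) g') \<le> e / 2 / 2 ^ n"
    using R2[OF I C dec g'M g'b g'0[unfolded K_def] e2] by blast
  have Ci: "subalgebra M (C i)" using C i(1) by blast
  interpret Cs: sigma_finite_subalgebra M "C i" by (rule sfs_of_subalg[OF prob_space_axioms Ci])
  have dL: "(\<lambda>x. g x - g' x) \<in> Lfun M n" by (rule Lfun_diff[OF gL g'L])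
  have gtL: "(\<lambda>x. g x - tt x) \<in> Lfun M n" by (rule Lfun_diff[OF gL ttL])
  have Egt: "real_cond_exp M K (\<lambda>x. g x - tt x) \<in> Lfun M n" by (rule ce_Lfun(1)[OF KM gtL])
  have sL: "(\<lambda>x. (-1) * real_cond_exp M K (\<lambda>x. g x - tt x) x) \<in> Lfun M n" by (rule Lfun_scale[OF Egt])
  have Ndiff: "Ni (\<lambda>x. g x - g' x) \<le> 2 ^ (n + 1) * Ni (\<lambda>x. g x - tt x)"
  proof -
    have "AE x in M. real_cond_exp M K (\<lambda>x. g x - tt x) x = real_cond_exp M K g x - real_cond_exp M K tt x"
      by (rule Ks.real_cond_exp_diff[OF gi tti])
    then have ae: "AE x in M. g x - g' x = (g x - tt x) + (-1) * real_cond_exp M K (\<lambda>x. g x - tt x) x"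
      using g0 unfolding K_def[symmetric] by eventually_elim (simp add: g'_def)
    have "Ni (\<lambda>x. g x - g' x) = Ni (\<lambda>x. (g x - tt x) + (-1) * real_cond_exp M K (\<lambda>x. g x - tt x) x)"
      by (rule Ni_cong[OF Lfun_meas[OF dL] Lfun_meas[OF Lfun_add[OF gtL sL]] ae])
    also have "\<dots> \<le> 2 ^ n * (Ni (\<lambda>x. g x - tt x) + Ni (\<lambda>x. (-1) * real_cond_exp M K (\<lambda>x. g x - tt x) x))"
      by (rule Ni_tri[OF gtL sL])
    also have "\<dots> \<le> 2 ^ n * (Ni (\<lambda>x. g x - tt x) + Ni (\<lambda>x. g x - tt x))"
      unfolding Ni_scale using ce_Lfun(2)[OF KM gtL] by simp
    also have "\<dots> = 2 ^ (n + 1) * Ni (\<lambda>x. g x - tt x)" by simp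
    finally show ?thesis .
  qed
  have E1: "real_cond_exp M (C i) g' \<in> Lfun M n" by (rule ce_Lfun(1)[OF Ci g'L])
  have E2: "real_cond_exp M (C i) (\<lambda>x. g x - g' x) \<in> Lfun M n" by (rule ce_Lfun(1)[OF Ci dL])
  have "AE x in M. real_cond_exp M (C i) (\<lambda>x. g' x + (g x - g' x)) x
      = real_cond_exp M (C i) g' x + real_cond_exp M (C i) (\<lambda>x. g x - g' x) x"
    by (rule Cs.real_cond_exp_add[OF Lfun_int[OF g'L] Lfun_int[OF dL]])
  then have aeE: "AE x in M. real_cond_exp M (C i) g x
      = real_cond_exp M (C i) g' x + real_cond_exp M (C i) (\<lambda>x. g x - g' x) x" by simp
  have "Ni (real_cond_exp M (C i) g) = Ni (\<lambda>x. real_cond_exp M (C i) g' x + real_cond_exp M (C i) (\<lambda>x. g x - g' x) x)"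
    by (rule Ni_cong[OF _ Lfun_meas[OF Lfun_add[OF E1 E2]] aeE]) simp
  also have "\<dots> \<le> 2 ^ n * (Ni (real_cond_exp M (C i) g') + Ni (real_cond_exp M (C i) (\<lambda>x. g x - g' x)))"
    by (rule Ni_tri[OF E1 E2])
  also have "\<dots> \<le> 2 ^ n * (e / 2 / 2 ^ n + 2 ^ (n + 1) * Ni (\<lambda>x. g x - tt x))"
    using i(2) order_trans[OF ce_Lfun(2)[OF Ci dL] Ndiff] by (intro mult_left_mono add_mono) simp_all
  also have "\<dots> = e / 2 + c * Ni (\<lambda>x. g x - tt x)" unfolding c_def by (simp add: field_simps)
  also have "\<dots> \<le> e" using mb unfolding tt_def by simp
  finally show ?thesis using i(1) by blast
qed


lemma inf_part:
  assumes I: "directed_set I le" and C: "\<forall>i\<in>I. subalgebra M (C i)"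
    and dec: "\<forall>i\<in>I. \<forall>j\<in>I. le i j \<longrightarrow> sets (C j) \<subseteq> sets (C i)"
  shows "is_inf_idem M n (cond_exp_op M ` C ` I) (cond_exp_op M (meet_closure_sa M I C))"
proof -
  define K where "K = meet_closure_sa M I C"
  have Ine: "I \<noteq> {}" using I by (simp add: directed_set_def)
  have KM: "subalgebra M K" unfolding K_def by (rule meet_basic(1)[OF Ine C])
  interpret Ks: sigma_finite_subalgebra M K by (rule sfs_of_subalg[OF prob_space_axioms KM])
  have Ci: "subalgebra M (C i)" if "i \<in> I" for i using C that by blast
  have bid: "bounded_idempotent M n (cond_exp_op M K)" by (rule ce_bidem[OF KM])
  have le1: "\<forall>a\<in>cond_exp_op M ` C ` I. idem_le M n (cond_exp_op M K) a"
  proof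
    fix a assume "a \<in> cond_exp_op M ` C ` I"
    then obtain i where i: "i \<in> I" "a = cond_exp_op M (C i)" by blast
    show "idem_le M n (cond_exp_op M K) a"
      unfolding i(2) cond_exp_op_def K_def by (rule inf_le1[OF Ine C i(1)])
  qed
  have le2: "idem_le M n u (cond_exp_op M K)"
    if u: "bounded_idempotent M n u" and lb: "\<forall>a\<in>cond_exp_op M ` C ` I. idem_le M n u a" for u
  proof -
    have ubo: "bounded_op M n u" using u by (simp add: bounded_idempotent_def)
    have ubi: "op_eq M n (u \<circ> real_cond_exp M (C i)) u"
      "op_eq M n (real_cond_exp M (C i) \<circ> u) u" if "i \<in> I" for i
      using lb that unfolding idem_le_def cond_exp_op_def by auto
    obtain K0 where K0: "K0 \<ge> 0" "\<And>f. f \<in> Lfun M n \<Longrightarrow> Ni (u f) \<le> K0 * Ni f"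
      using bop_K[OF ubo] by blast
    have A: "op_eq M n (u \<circ> real_cond_exp M K) u"
      unfolding op_eq_def
    proof
      fix f assume f: "f \<in> Lfun M n"
      have fi: "integrable M f" by (rule Lfun_int[OF f])
      have EL: "real_cond_exp M K f \<in> Lfun M n" by (rule ce_Lfun(1)[OF KM f])
      define g where "g x = f x - real_cond_exp M K f x" for x
      have gL: "g \<in> Lfun M n" unfolding g_def by (rule Lfun_diff[OF f EL])
      have g0: "AE x in M. real_cond_exp M K g x = 0"
      proof -
        have "AE x in M. real_cond_exp M K g x = real_cond_exp M K f x - real_cond_exp M K (real_cond_exp M K f) x"
          unfolding g_def by (rule Ks.real_cond_exp_diff[OF fi Ks.real_cond_exp_int(1)[OF fi]])
        moreover have "AE x in M. real_cond_exp M K (real_cond_exp M K f) x = real_cond_exp M K f x"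
          by (rule Ks.real_cond_exp_F_meas[OF Ks.real_cond_exp_int(1)[OF fi]]) simp
        ultimately show ?thesis by eventually_elim simp
      qed
      have ugL: "u g \<in> Lfun M n" by (rule bop_Lfun[OF ubo gL])
      have ug0: "AE x in M. u g x = 0"
      proof (rule Ni_zero_eps[OF ugL])
        fix \<epsilon> :: real assume \<epsilon>: "\<epsilon> > 0"
        have e2: "\<epsilon> / (K0 + 1) > 0" using \<epsilon> K0(1) by simp
        obtain i where i: "i \<in> I" "Ni (real_cond_exp M (C i) g) \<le> \<epsilon> / (K0 + 1)"
          using R1[OF I C dec gL g0[unfolded K_def] e2] by blast
        have EgL: "real_cond_exp M (C i) g \<in> Lfun M n" by (rule ce_Lfun(1)[OF Ci[OF i(1)] gL])
        have "AE x in M. u (real_cond_exp M (C i) g) x = u g x"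
          using ubi(1)[OF i(1)] gL unfolding op_eq_def by auto
        then have "Ni (u g) = Ni (u (real_cond_exp M (C i) g))"
          by (intro Ni_cong bop_meas[OF ubo gL] bop_meas[OF ubo EgL]) (auto elim: eventually_mono)
        also have "\<dots> \<le> K0 * Ni (real_cond_exp M (C i) g)" by (rule K0(2)[OF EgL])
        also have "\<dots> \<le> K0 * (\<epsilon> / (K0 + 1))" using i(2) K0(1) by (rule mult_left_mono)
        also have "\<dots> \<le> \<epsilon>"
        proof -
          have "K0 * (\<epsilon> / (K0 + 1)) = \<epsilon> * (K0 / (K0 + 1))" by simp
          also have "\<dots> \<le> \<epsilon> * 1" using \<epsilon> K0(1) by (intro mult_left_mono) simp_all
          finally show ?thesis by simp
        qed
        finally show "Ni (u g) \<le> \<epsilon>" .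
      qed
      have "AE x in M. u g x = u f x - u (real_cond_exp M K f) x"
        unfolding g_def by (rule bop_diff[OF ubo f EL])
      then show "AE x in M. (u \<circ> real_cond_exp M K) f x = u f x"
        using ug0 by eventually_elim simp
    qed
    have B: "op_eq M n (real_cond_exp M K \<circ> u) u"
      unfolding op_eq_def
    proof
      fix f assume f: "f \<in> Lfun M n"
      have ufL: "u f \<in> Lfun M n" by (rule bop_Lfun[OF ubo f])
      have ufM: "u f \<in> borel_measurable M" by (rule Lfun_meas[OF ufL])
      have "u f \<in> borel_measurable (cl (C i))" if i: "i \<in> I" for i
      proof (rule meas_closure[OF Ci[OF i] ufM borel_measurable_cond_exp])
        show "AE x in M. u f x = real_cond_exp M (C i) (u f) x"
          using ubi(2)[OF i] f unfolding op_eq_def by (auto elim: eventually_mono)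
      qed
      then have "u f \<in> borel_measurable K" unfolding K_def by (rule meas_meet[OF Ine C])
      then show "AE x in M. (real_cond_exp M K \<circ> u) f x = u f x"
        using Ks.real_cond_exp_F_meas[OF Lfun_int[OF ufL]] by simp
    qed
    show ?thesis unfolding idem_le_def cond_exp_op_def using A B by simp
  qed
  show ?thesis unfolding is_inf_idem_def K_def[symmetric] using bid le1 le2 by blast
qed

end

theorem proposition4p23:
  fixes M :: "'a::polish_space measure" and n :: nat
    and I :: "'i set" and le :: "'i \<Rightarrow> 'i \<Rightarrow> bool"
    and B C :: "'i \<Rightarrow> 'a measure"
  assumes "prob_space M"
    and "space M = UNIV" and "sets M = sets borel"
    and "n \<ge> 1"
    and "directed_set I le"
  shows "((\<forall>i\<in>I. subalgebra M (B i)) \<and>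
         (\<forall>i\<in>I. \<forall>j\<in>I. le i j \<longrightarrow> sets (B i) \<subseteq> sets (B j)) \<longrightarrow>
           is_sup_idem M n (cond_exp_op M ` B ` I) (cond_exp_op M (join_sa M I B))) \<and>
         ((\<forall>i\<in>I. subalgebra M (C i)) \<and>
         (\<forall>i\<in>I. \<forall>j\<in>I. le i j \<longrightarrow> sets (C j) \<subseteq> sets (C i)) \<longrightarrow>
           is_inf_idem M n (cond_exp_op M ` C ` I) (cond_exp_op M (meet_closure_sa M I C)))"
proof -
  interpret LS M n using assms(1,4) by (simp add: LS_def LS_axioms_def)
  show ?thesis using sup_part[OF assms(5)] inf_part[OF assms(5)] by blast
qed

end
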